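(* Let $\rho\in(0,\infty)$ and $d=d(L)\to0$ with $dL\to\infty$. For every $H\in\mathcal D(\hat{\mathcal G})$, $$\lim_{N/L\to\rho}\ \sup_{\eta\in\Omega_{L,N}}\Big|\frac1{dL}\mathfrak L_{L,N}\big(H\circ\hat\mu_{L,N}^{(\cdot)}\big)(\eta)-\hat{\mathcal G}H(\hat\mu_{L,N}^{(\eta)})\Big|=0.$$
   Context: Inclusion process: $\Omega_{L,N}=\{\eta\in\mathbb N_0^L:\sum_x\eta_x=N\}$, $\mathfrak L_{L,N}f(\eta)=\sum_{x\ne y}\eta_x(d+\eta_y)[f(\eta^{x,y})-f(\eta)]$, $\eta^{x,y}=\eta-e^x+e^y$; "$N/L\to\rho$" means $N,L\to\infty$ with $N/L\to\rho$. $\overline{\mathbb R}_+=[0,\infty]$; $\hat\mu^{(\eta)}_{L,N}=\sum_x\frac{\eta_x}N\delta_{dL\eta_x/N}\in\mathcal M_1(\overline{\mathbb R}_+)$. $\hat Ah(z)=zh''(z)+(2-z)h'(z)+(h(0)-h(z))$ on $\mathcal D(\hat A)=\{h\in C(\overline{\mathbb R}_+):h(\infty)=0,h|_{\mathbb R_+}\in C_c^3(\mathbb R_+)\}\cup\{\text{constants}\}$. $\mathcal D(\hat{\mathcal G})$ is the algebra generated by $\mu\mapsto\mu(h)$, $h\in\mathcal D(\hat A)$, and $\hat{\mathcal G}\prod_{k=1}^n\mu(h_k)=\sum_k\mu(\hat Ah_k)\prod_{m\ne k}\mu(h_m)$, extended linearly. *)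

theory Defs
  imports "HOL-Analysis.Analysis"
begin

definition Omega :: "nat \<Rightarrow> nat \<Rightarrow> (nat \<Rightarrow> nat) set" where
  "Omega L N = {\<eta>. (\<forall>x\<ge>L. \<eta> x = 0) \<and> (\<Sum>x<L. \<eta> x) = N}"

definition jump :: "(nat \<Rightarrow> nat) \<Rightarrow> nat \<Rightarrow> nat \<Rightarrow> (nat \<Rightarrow> nat)" where
  "jump \<eta> x y = (\<eta>(x := \<eta> x - 1))(y := \<eta> y + 1)"

definition gen :: "nat \<Rightarrow> real \<Rightarrow> ((nat \<Rightarrow> nat) \<Rightarrow> real) \<Rightarrow> (nat \<Rightarrow> nat) \<Rightarrow> real" where
  "gen L d f \<eta> = (\<Sum>x<L. \<Sum>y\<in>{..<L} - {x}.
       real (\<eta> x) * (d + real (\<eta> y)) * (f (jump \<eta> x y) - f \<eta>))"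

text \<open>Pairing of the empirical measure
  sum_x (eta_x/N) delta_{dL eta_x/N} on [0,\<infinity>] with a function h.\<close>
definition emp :: "nat \<Rightarrow> nat \<Rightarrow> real \<Rightarrow> (nat \<Rightarrow> nat) \<Rightarrow> (ennreal \<Rightarrow> real) \<Rightarrow> real" where
  "emp L N d \<eta> h = (\<Sum>x<L. (real (\<eta> x) / real N) *
       h (ennreal (d * real L * real (\<eta> x) / real N)))"

definition hr :: "(ennreal \<Rightarrow> real) \<Rightarrow> real \<Rightarrow> real" where
  "hr h r = h (ennreal r)"

definition D1 :: "(real \<Rightarrow> real) \<Rightarrow> real \<Rightarrow> real" where
  "D1 f x = (SOME D. (f has_real_derivative D) (at x within {0..}))"

definition C3c_Rplus :: "(real \<Rightarrow> real) \<Rightarrow> bool" where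
  "C3c_Rplus f \<longleftrightarrow> (\<exists>f1 f2 f3. (\<forall>x\<ge>0.
       (f has_real_derivative f1 x) (at x within {0..}) \<and>
       (f1 has_real_derivative f2 x) (at x within {0..}) \<and>
       (f2 has_real_derivative f3 x) (at x within {0..})) \<and>
     continuous_on {0..} f3 \<and> (\<exists>R. \<forall>x\<ge>R. f x = 0))"

definition domA :: "(ennreal \<Rightarrow> real) \<Rightarrow> bool" where
  "domA h \<longleftrightarrow> (continuous_on UNIV h \<and> h \<infinity> = 0 \<and> C3c_Rplus (hr h))
              \<or> (\<exists>c. h = (\<lambda>_. c))"

definition Ahat :: "(ennreal \<Rightarrow> real) \<Rightarrow> ennreal \<Rightarrow> real" where
  "Ahat h z = (if z = \<infinity> then h 0 - h \<infinity>
     else (let r = enn2real z in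
        r * D1 (D1 (hr h)) r + (2 - r) * D1 (hr h) r + (h 0 - h z)))"

text \<open>An element of D(G-hat) is given by a representation
  sum_j c_j prod_k mu(h_jk); mu is given through its pairing map h \<mapsto> mu(h).\<close>
type_synonym polyrep = "(real \<times> (ennreal \<Rightarrow> real) list) list"

definition polyrep_ok :: "polyrep \<Rightarrow> bool" where
  "polyrep_ok P \<longleftrightarrow> (\<forall>(c, hs) \<in> set P. \<forall>h \<in> set hs. domA h)"

definition evalH :: "polyrep \<Rightarrow> ((ennreal \<Rightarrow> real) \<Rightarrow> real) \<Rightarrow> real" where
  "evalH P mu = (\<Sum>(c, hs) \<leftarrow> P. c * prod_list (map mu hs))"

definition genH :: "polyrep \<Rightarrow> ((ennreal \<Rightarrow> real) \<Rightarrow> real) \<Rightarrow> real" where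
  "genH P mu = (\<Sum>(c, hs) \<leftarrow> P. c * (\<Sum>k<length hs.
       mu (Ahat (hs ! k)) * (\<Prod>m\<in>{..<length hs} - {k}. mu (hs ! m))))"

end

theory Submission
  imports Defs
begin


lemma at_within_pos: "(x::real) > 0 \<Longrightarrow> at x within {0..} = at x"
  by (rule at_within_open_subset[of _ "{0<..}"]) auto

lemma deriv_within_pos:
  "(x::real) > 0 \<Longrightarrow> (f has_real_derivative D) (at x within {0..}) \<longleftrightarrow> (f has_real_derivative D) (at x)"
  by (simp add: at_within_pos)

lemma mvt_bound:
  fixes g g' :: "real \<Rightarrow> real"
  assumes "convex S" "\<And>s. s \<in> S \<Longrightarrow> (g has_real_derivative g' s) (at s within S)"
    "\<And>s. s \<in> S \<Longrightarrow> \<bar>g' s\<bar> \<le> B" "x \<in> S" "y \<in> S"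
  shows "\<bar>g y - g x\<bar> \<le> B * \<bar>y - x\<bar>"
proof -
  have "norm (g y - g x) \<le> B * norm (y - x)"
  proof (rule differentiable_bound[OF assms(1), of g "\<lambda>s h. h * g' s"])
    show "(g has_derivative (\<lambda>h. h * g' s)) (at s within S)" if "s \<in> S" for s
    proof -
      have e: "(\<lambda>h. h * g' s) = (*) (g' s)" by (auto simp: fun_eq_iff)
      show ?thesis using assms(2)[OF that] unfolding e has_field_derivative_def .
    qed
    show "onorm (\<lambda>h. h * g' s) \<le> B" if "s \<in> S" for s
    proof (rule onorm_le)
      fix h :: real
      have "\<bar>h\<bar> * \<bar>g' s\<bar> \<le> \<bar>h\<bar> * B" using assms(3)[OF that] by (simp add: mult_left_mono)
      then show "norm (h * g' s) \<le> B * norm h" by (simp add: abs_mult mult.commute)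
    qed
  qed (use assms in auto)
  then show ?thesis by simp
qed

lemma seg_sub: "(x::real) \<ge> 0 \<Longrightarrow> y \<ge> 0 \<Longrightarrow> {min x y..max x y} \<subseteq> {0..}" by auto

lemma T0:
  fixes g g' :: "real \<Rightarrow> real"
  assumes "\<And>s. s \<ge> 0 \<Longrightarrow> (g has_real_derivative g' s) (at s within {0..})"
    "\<And>s. s \<ge> 0 \<Longrightarrow> \<bar>g' s\<bar> \<le> B" "x \<ge> 0" "y \<ge> 0"
  shows "\<bar>g y - g x\<bar> \<le> B * \<bar>y - x\<bar>"
  by (rule mvt_bound[of "{0..}"]) (use assms in auto)

lemma T1:
  fixes g g' g'' :: "real \<Rightarrow> real"
  assumes "\<And>s. s \<ge> 0 \<Longrightarrow> (g has_real_derivative g' s) (at s within {0..})"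
    "\<And>s. s \<ge> 0 \<Longrightarrow> (g' has_real_derivative g'' s) (at s within {0..})"
    "\<And>s. s \<ge> 0 \<Longrightarrow> \<bar>g'' s\<bar> \<le> B" "x \<ge> 0" "y \<ge> 0"
  shows "\<bar>g y - g x - (y - x) * g' x\<bar> \<le> B * (y - x)^2"
proof -
  let ?S = "{min x y..max x y}"
  have "\<bar>(g y - g x - (y - x) * g' x) - (g x - g x - (x - x) * g' x)\<bar> \<le> (B * \<bar>y - x\<bar>) * \<bar>y - x\<bar>"
  proof (rule mvt_bound[of ?S "\<lambda>s. g s - g x - (s - x) * g' x" "\<lambda>s. g' s - g' x"])
    show "convex ?S" by (simp add: convex_real_interval)
    show "((\<lambda>s. g s - g x - (s - x) * g' x) has_real_derivative g' s - g' x) (at s within ?S)" if "s \<in> ?S" for s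
    proof -
      have "(g has_real_derivative g' s) (at s within ?S)"
        using assms(1)[of s] that assms(4,5) has_field_derivative_subset[OF _ seg_sub] by force
      then show ?thesis by (auto intro!: derivative_eq_intros)
    qed
    show "\<bar>g' s - g' x\<bar> \<le> B * \<bar>y - x\<bar>" if "s \<in> ?S" for s
    proof -
      have "\<bar>g' s - g' x\<bar> \<le> B * \<bar>s - x\<bar>" using T0[OF assms(2,3)] that assms(4,5) by auto
      also have "\<dots> \<le> B * \<bar>y - x\<bar>"
        using that assms(3)[of 0] by (intro mult_left_mono) auto
      finally show ?thesis .
    qed
  qed (auto)
  moreover have "(B * \<bar>y - x\<bar>) * \<bar>y - x\<bar> = B * (y - x)^2"
    by (simp add: power2_eq_square mult.assoc abs_mult_self_eq)
  ultimately show ?thesis by simp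
qed

lemma T2:
  fixes g g' g'' g''' :: "real \<Rightarrow> real"
  assumes "\<And>s. s \<ge> 0 \<Longrightarrow> (g has_real_derivative g' s) (at s within {0..})"
    "\<And>s. s \<ge> 0 \<Longrightarrow> (g' has_real_derivative g'' s) (at s within {0..})"
    "\<And>s. s \<ge> 0 \<Longrightarrow> (g'' has_real_derivative g''' s) (at s within {0..})"
    "\<And>s. s \<ge> 0 \<Longrightarrow> \<bar>g''' s\<bar> \<le> B" "x \<ge> 0" "y \<ge> 0"
  shows "\<bar>g y - g x - (y - x) * g' x - (y - x)^2 / 2 * g'' x\<bar> \<le> B * \<bar>y - x\<bar>^3"
proof -
  let ?S = "{min x y..max x y}"
  let ?p = "\<lambda>s. g s - g x - (s - x) * g' x - (s - x)^2 / 2 * g'' x"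
  have "\<bar>?p y - ?p x\<bar> \<le> (B * (y - x)^2) * \<bar>y - x\<bar>"
  proof (rule mvt_bound[of ?S ?p "\<lambda>s. g' s - g' x - (s - x) * g'' x"])
    show "convex ?S" by (simp add: convex_real_interval)
    show "(?p has_real_derivative g' s - g' x - (s - x) * g'' x) (at s within ?S)" if "s \<in> ?S" for s
    proof -
      have "(g has_real_derivative g' s) (at s within ?S)"
        using assms(1)[of s] that assms(5,6) has_field_derivative_subset[OF _ seg_sub] by force
      then show ?thesis by (auto intro!: derivative_eq_intros simp: power2_eq_square field_simps)
    qed
    show "\<bar>g' s - g' x - (s - x) * g'' x\<bar> \<le> B * (y - x)^2" if "s \<in> ?S" for s
    proof -
      have "\<bar>g' s - g' x - (s - x) * g'' x\<bar> \<le> B * (s - x)^2" using T1[OF assms(2,3,4)] that assms(5,6) by auto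
      also have "\<dots> \<le> B * (y - x)^2"
        using that assms(4)[of 0] by (intro mult_left_mono) (auto simp: abs_le_square_iff[symmetric])
      finally show ?thesis .
    qed
  qed (auto)
  moreover have "(B * (y - x)^2) * \<bar>y - x\<bar> = B * \<bar>y - x\<bar>^3"
  proof -
    have "(y - x)^2 = \<bar>y - x\<bar>^2" by simp
    then show ?thesis by (simp only: power2_eq_square power3_eq_cube mult.assoc)
  qed
  ultimately show ?thesis by simp
qed

locale c3f =
  fixes f f1 f2 f3 :: "real \<Rightarrow> real" and R :: real
  assumes R0: "R \<ge> 0"
    and d1: "\<And>x. x \<ge> 0 \<Longrightarrow> (f has_real_derivative f1 x) (at x within {0..})"
    and d2: "\<And>x. x \<ge> 0 \<Longrightarrow> (f1 has_real_derivative f2 x) (at x within {0..})"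
    and d3: "\<And>x. x \<ge> 0 \<Longrightarrow> (f2 has_real_derivative f3 x) (at x within {0..})"
    and c3: "continuous_on {0..} f3"
    and supp: "\<And>x. x \<ge> R \<Longrightarrow> f x = 0"
begin

lemma zero_beyond_gen:
  assumes "\<And>x. x > R \<Longrightarrow> g x = 0" "\<And>x. x \<ge> 0 \<Longrightarrow> (g has_real_derivative g' x) (at x within {0..})"
    and "x > R"
  shows "g' x = 0"
proof -
  have x0: "x > 0" using assms(3) R0 by linarith
  have a: "(g has_real_derivative g' x) (at x)" using assms(2)[of x] x0 deriv_within_pos by auto
  have b: "((\<lambda>_. 0) has_real_derivative 0) (at x)" by simp
  have "(g has_real_derivative 0) (at x)"
    by (rule has_field_derivative_transform_within_open[OF b, of "{R<..}"]) (use assms in auto)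
  then show ?thesis using a DERIV_unique by blast
qed

lemma f0: "x > R \<Longrightarrow> f x = 0" using supp by auto
lemma f10: "x > R \<Longrightarrow> f1 x = 0" using zero_beyond_gen[OF f0 d1] by blast
lemma f20: "x > R \<Longrightarrow> f2 x = 0" using zero_beyond_gen[OF f10 d2] by blast
lemma f30: "x > R \<Longrightarrow> f3 x = 0" using zero_beyond_gen[OF f20 d3] by blast

lemma bounded_gen:
  fixes g :: "real \<Rightarrow> real"
  assumes "continuous_on {0..} g" "\<And>x. x > R \<Longrightarrow> g x = 0"
  shows "\<exists>M\<ge>0. \<forall>x\<ge>0. \<bar>g x\<bar> \<le> M"
proof -
  have "compact (g ` {0..R})"
    by (rule compact_continuous_image[OF continuous_on_subset[OF assms(1)]]) auto
  then obtain M where M: "\<forall>y\<in>g ` {0..R}. norm y \<le> M"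
    using compact_imp_bounded bounded_iff by metis
  show ?thesis
  proof (intro exI[of _ "max M 0"] conjI allI impI)
    fix x :: real assume "x \<ge> 0"
    show "\<bar>g x\<bar> \<le> max M 0"
    proof (cases "x \<le> R")
      case True then show ?thesis using M \<open>x\<ge>0\<close> by force
    next
      case False then show ?thesis using assms(2) by auto
    qed
  qed simp
qed

lemma cont_of_deriv:
  assumes "\<And>x. x \<ge> 0 \<Longrightarrow> (g has_real_derivative g' x) (at x within {0..})"
  shows "continuous_on {0..} g"
  by (rule DERIV_continuous_on[of _ _ g']) (use assms in auto)

lemma bounds: "\<exists>M0 M1 M2 M3. M0 \<ge> 0 \<and> M1 \<ge> 0 \<and> M2 \<ge> 0 \<and> M3 \<ge> 0 \<and>
   (\<forall>x\<ge>0. \<bar>f x\<bar> \<le> M0 \<and> \<bar>f1 x\<bar> \<le> M1 \<and> \<bar>f2 x\<bar> \<le> M2 \<and> \<bar>f3 x\<bar> \<le> M3)"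
proof -
  obtain M0 where a: "M0 \<ge> 0" "\<forall>x\<ge>0. \<bar>f x\<bar> \<le> M0" using bounded_gen[OF cont_of_deriv[OF d1] f0] by blast
  obtain M1 where b: "M1 \<ge> 0" "\<forall>x\<ge>0. \<bar>f1 x\<bar> \<le> M1" using bounded_gen[OF cont_of_deriv[OF d2] f10] by blast
  obtain M2 where c: "M2 \<ge> 0" "\<forall>x\<ge>0. \<bar>f2 x\<bar> \<le> M2" using bounded_gen[OF cont_of_deriv[OF d3] f20] by blast
  obtain M3 where d: "M3 \<ge> 0" "\<forall>x\<ge>0. \<bar>f3 x\<bar> \<le> M3" using bounded_gen[OF c3 f30] by blast
  show ?thesis by (rule exI[of _ M0], rule exI[of _ M1], rule exI[of _ M2], rule exI[of _ M3]) (simp add: a b c d)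
qed

end

locale c3fb = c3f +
  fixes M0 M1 M2 M3 :: real
  assumes M0: "\<And>x. x \<ge> 0 \<Longrightarrow> \<bar>f x\<bar> \<le> M0"
    and M1: "\<And>x. x \<ge> 0 \<Longrightarrow> \<bar>f1 x\<bar> \<le> M1"
    and M2: "\<And>x. x \<ge> 0 \<Longrightarrow> \<bar>f2 x\<bar> \<le> M2"
    and M3: "\<And>x. x \<ge> 0 \<Longrightarrow> \<bar>f3 x\<bar> \<le> M3"
begin

lemma Mnn: "M0 \<ge> 0" "M1 \<ge> 0" "M2 \<ge> 0" "M3 \<ge> 0"
  using M0[of 0] M1[of 0] M2[of 0] M3[of 0] by auto

lemma W_gen:
  assumes "x \<ge> 0" "y \<ge> 0" "min x y > R \<Longrightarrow> e = 0" "\<bar>e\<bar> \<le> B"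
  shows "max x y * \<bar>e\<bar> \<le> (R + \<bar>y - x\<bar>) * B"
proof (cases "min x y > R")
  case True then show ?thesis using assms R0 by auto
next
  case False
  then have "max x y \<le> R + \<bar>y - x\<bar>" by auto
  then show ?thesis using assms by (intro mult_mono) auto
qed

lemma P0: "x \<ge> 0 \<Longrightarrow> y \<ge> 0 \<Longrightarrow> \<bar>f y - f x\<bar> \<le> M1 * \<bar>y - x\<bar>"
  by (rule T0[OF d1 M1])
lemma P1: "x \<ge> 0 \<Longrightarrow> y \<ge> 0 \<Longrightarrow> \<bar>f y - f x - (y - x) * f1 x\<bar> \<le> M2 * (y - x)^2"
  by (rule T1[OF d1 d2 M2])
lemma P2: "x \<ge> 0 \<Longrightarrow> y \<ge> 0 \<Longrightarrow> \<bar>f y - f x - (y - x) * f1 x - (y - x)^2 / 2 * f2 x\<bar> \<le> M3 * \<bar>y - x\<bar>^3"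
  by (rule T2[OF d1 d2 d3 M3])

lemma W0: "x \<ge> 0 \<Longrightarrow> y \<ge> 0 \<Longrightarrow> max x y * \<bar>f y - f x\<bar> \<le> (R + \<bar>y - x\<bar>) * (M1 * \<bar>y - x\<bar>)"
  by (rule W_gen[OF _ _ _ P0]) (simp_all add: f0)

lemma W1: "x \<ge> 0 \<Longrightarrow> y \<ge> 0 \<Longrightarrow> max x y * \<bar>f y - f x - (y - x) * f1 x\<bar> \<le> (R + \<bar>y - x\<bar>) * (M2 * (y - x)^2)"
  by (rule W_gen[OF _ _ _ P1]) (simp_all add: f0 f10)

lemma W2: "x \<ge> 0 \<Longrightarrow> y \<ge> 0 \<Longrightarrow> max x y * \<bar>f y - f x - (y - x) * f1 x - (y - x)^2 / 2 * f2 x\<bar> \<le> (R + \<bar>y - x\<bar>) * (M3 * \<bar>y - x\<bar>^3)"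
  by (rule W_gen[OF _ _ _ P2]) (simp_all add: f0 f10 f20)

lemma S1: "x \<ge> 0 \<Longrightarrow> x * \<bar>f1 x\<bar> \<le> R * M1"
proof (cases "x > R")
  case False
  assume x: "x \<ge> 0"
  from mult_mono[of x R, OF _ M1[OF x]] show ?thesis using R0 False x by simp
qed (simp add: f10 R0 Mnn)
lemma S22: "x \<ge> 0 \<Longrightarrow> x * x * \<bar>f2 x\<bar> \<le> R * R * M2"
proof (cases "x > R")
  case False
  assume x: "x \<ge> 0"
  have "x * x \<le> R * R" using False x by (intro mult_mono) auto
  from mult_mono[OF this M2[OF x]] show ?thesis using R0 by simp
qed (simp add: f20 R0 Mnn)

end


lemma abs_add_k: "(k::real) \<ge> 0 \<Longrightarrow> \<bar>a + k * b\<bar> \<le> \<bar>a\<bar> + k * \<bar>b\<bar>"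
  by (metis abs_mult abs_of_nonneg abs_triangle_ineq)
lemma abs_sub_k: "(k::real) \<ge> 0 \<Longrightarrow> \<bar>k * b - a\<bar> \<le> k * \<bar>b\<bar> + \<bar>a\<bar>"
  by (metis abs_mult abs_of_nonneg abs_triangle_ineq4)

lemma abs3: "(k::real) \<ge> 0 \<Longrightarrow> \<bar>k * a + b - c\<bar> \<le> k * \<bar>a\<bar> + \<bar>b\<bar> + \<bar>c\<bar>"
proof -
  assume k: "k \<ge> 0"
  have "\<bar>k * a\<bar> = k * \<bar>a\<bar>" using k by (simp add: abs_mult)
  then show ?thesis using abs_triangle_ineq[of "k * a" b] abs_triangle_ineq4[of "k * a + b" c] by linarith
qed
lemma abs2: "(k1::real) \<ge> 0 \<Longrightarrow> k2 \<ge> 0 \<Longrightarrow> \<bar>k1 * a + k2 * b\<bar> \<le> k1 * \<bar>a\<bar> + k2 * \<bar>b\<bar>"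
proof -
  assume k: "k1 \<ge> 0" "k2 \<ge> 0"
  have "\<bar>k1 * a\<bar> = k1 * \<bar>a\<bar>" "\<bar>k2 * b\<bar> = k2 * \<bar>b\<bar>" using k by (simp_all add: abs_mult)
  then show ?thesis using abs_triangle_ineq[of "k1 * a" "k2 * b"] by linarith
qed

lemma abs4: "\<bar>(A::real) + B - C + D\<bar> \<le> \<bar>A\<bar> + \<bar>B\<bar> + \<bar>C\<bar> + \<bar>D\<bar>"
  by linarith

lemma abs_scale: "(c::real) \<ge> 0 \<Longrightarrow> \<bar>X\<bar> \<le> Y \<Longrightarrow> \<bar>c * X\<bar> \<le> c * Y"
  by (simp add: abs_mult mult_left_mono)

lemma site_ident:
  fixes n l d u k Na Nb z F F0 F1 F2 :: real
  assumes "n > 0" "l > 0" "d > 0" "u = d * l / n"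
  shows "k * (n - k) * (Na / n + Nb / n) + d * (l - 1) * k * (Na / n) - d * k * (Nb / n) + d * n * (Nb / n)
     - (d * l * (k / n) * (z * F2 + (2 - z) * F1 - F) + d * F0)
   = d * l * ((k / n) * ((1 - k / n) * (Na + Nb) / u - (z * F2 + 2 * F1))
      + (k / n) * (((l - 1) / l) * Na + F + z * F1) - (k / n) * Nb / l + (Nb - F0) / l)"
  using assms by (simp add: field_simps)

context c3fb begin

lemma site_k1:
  fixes n l d u kk :: real
  assumes n: "n > 0" and l: "l > 0" and d: "d > 0" and un: "u * n = d * l" and u1: "u \<le> 1"
    and k1: "kk \<ge> 1" and kn: "kk \<le> n"
  defines "z \<equiv> u * kk"
  defines "Na \<equiv> (kk - 1) * f (z - u) - kk * f z"
  defines "Nb \<equiv> (kk + 1) * f (z + u) - kk * f z"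
  shows "\<bar>(kk / n) * ((1 - kk / n) * (Na + Nb) / u - (z * f2 z + 2 * f1 z))\<bar>
           \<le> (kk / n) * (2 * (R + u) * M3 * u + (R * R * M2 + 2 * R * M1) / (d * l))"
    and "\<bar>(kk / n) * (((l - 1) / l) * Na + f z + z * f1 z)\<bar>
           \<le> (kk / n) * ((R + u) * M2 * u + M1 * u + (M0 + (R + u) * M1) / l)"
    and "\<bar>(kk / n) * Nb / l\<bar> \<le> (kk / n) * ((M0 + (R + u) * M1) / l)"
    and "\<bar>(Nb - f 0) / l\<bar> \<le> (kk / n) * (2 * M1 * d) + M1 * u / l"
proof -
  have u0: "u > 0" using un n d l by (metis mult_pos_pos zero_less_mult_pos2)
  have z0: "z \<ge> 0" "z - u \<ge> 0" "z + u \<ge> 0" using u0 k1 unfolding z_def by (auto simp: algebra_simps)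
  have k0: "kk > 0" using k1 by linarith
  have kn': "kk / n \<ge> 0" "kk / n \<le> 1" "1 - kk / n \<ge> 0" "1 - kk / n \<le> 1" using kn k0 n by auto
  have zu: "z = u * kk" by (simp add: z_def)
  have W0m: "kk * \<bar>f (z - u) - f z\<bar> \<le> (R + u) * M1"
  proof -
    have "max z (z - u) * \<bar>f (z - u) - f z\<bar> \<le> (R + \<bar>z - u - z\<bar>) * (M1 * \<bar>z - u - z\<bar>)" by (rule W0) (use z0 in auto)
    then have "z * \<bar>f (z - u) - f z\<bar> \<le> (R + u) * M1 * u" using u0 by (simp add: max_def)
    then have "u * (kk * \<bar>f (z - u) - f z\<bar>) \<le> u * ((R + u) * M1)" by (simp add: zu algebra_simps)
    then show ?thesis using u0 by simp
  qed
  have W0p: "kk * \<bar>f (z + u) - f z\<bar> \<le> (R + u) * M1"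
  proof -
    have "max z (z + u) * \<bar>f (z + u) - f z\<bar> \<le> (R + \<bar>z + u - z\<bar>) * (M1 * \<bar>z + u - z\<bar>)" by (rule W0) (use z0 in auto)
    then have "(z + u) * \<bar>f (z + u) - f z\<bar> \<le> (R + u) * M1 * u" using u0 by (simp add: max_def)
    moreover have "z * \<bar>f (z + u) - f z\<bar> \<le> (z + u) * \<bar>f (z + u) - f z\<bar>" using u0 by (intro mult_right_mono) auto
    ultimately have "u * (kk * \<bar>f (z + u) - f z\<bar>) \<le> u * ((R + u) * M1)" by (simp add: zu algebra_simps)
    then show ?thesis using u0 by simp
  qed
  have Nbb: "\<bar>Nb\<bar> \<le> M0 + (R + u) * M1"
  proof -
    have "Nb = f (z + u) + kk * (f (z + u) - f z)" unfolding Nb_def by (simp add: algebra_simps)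
    then have "\<bar>Nb\<bar> \<le> \<bar>f (z + u)\<bar> + kk * \<bar>f (z + u) - f z\<bar>" using k0 abs_add_k by simp
    then show ?thesis using W0p M0[OF z0(3)] by linarith
  qed
  have Nab: "\<bar>Na\<bar> \<le> M0 + (R + u) * M1"
  proof -
    have "Na = kk * (f (z - u) - f z) - f (z - u)" unfolding Na_def by (simp add: algebra_simps)
    then have "\<bar>Na\<bar> \<le> kk * \<bar>f (z - u) - f z\<bar> + \<bar>f (z - u)\<bar>" using k0 abs_sub_k by simp
    then show ?thesis using W0m M0[OF z0(2)] by linarith
  qed
  show "\<bar>(kk / n) * Nb / l\<bar> \<le> (kk / n) * ((M0 + (R + u) * M1) / l)"
  proof -
    have "\<bar>(kk / n) * Nb / l\<bar> = (kk / n) * (\<bar>Nb\<bar> / l)" using kn' l k0 n by (simp add: abs_mult)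
    also have "\<dots> \<le> (kk / n) * ((M0 + (R + u) * M1) / l)"
      using Nbb l kn' by (intro mult_left_mono divide_right_mono) auto
    finally show ?thesis .
  qed
  show "\<bar>(Nb - f 0) / l\<bar> \<le> (kk / n) * (2 * M1 * d) + M1 * u / l"
  proof -
    have e: "Nb - f 0 = (f (z + u) - f 0) + kk * (f (z + u) - f z)" unfolding Nb_def by (simp add: algebra_simps)
    have a: "\<bar>f (z + u) - f 0\<bar> \<le> M1 * (z + u)" using P0[of 0 "z + u"] z0 by simp
    have b: "\<bar>f (z + u) - f z\<bar> \<le> M1 * u" using P0[of z "z + u"] z0 u0 by simp
    have "kk * \<bar>f (z + u) - f z\<bar> \<le> kk * (M1 * u)" using b k0 by (intro mult_left_mono) auto
    moreover have "\<bar>Nb - f 0\<bar> \<le> \<bar>f (z + u) - f 0\<bar> + kk * \<bar>f (z + u) - f z\<bar>" unfolding e using abs_add_k k0 by simp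
    ultimately have "\<bar>Nb - f 0\<bar> \<le> M1 * (2 * z + u)" using a unfolding zu by (simp add: algebra_simps)
    then have "\<bar>(Nb - f 0) / l\<bar> \<le> M1 * (2 * z + u) / l" using l by (simp add: divide_right_mono)
    also have "M1 * (2 * z + u) / l = (kk / n) * (2 * M1 * d) + M1 * u / l"
    proof -
      have "z / l = d * kk / n" using un n l unfolding zu by (simp add: field_simps)
      then have "M1 * (2 * z) / l = (kk / n) * (2 * M1 * d)"
        by (metis (no_types, opaque_lifting) mult.assoc mult.commute times_divide_eq_right)
      then show ?thesis by (simp add: add_divide_distrib distrib_left)
    qed
    finally show ?thesis .
  qed
  show "\<bar>(kk / n) * (((l - 1) / l) * Na + f z + z * f1 z)\<bar>
           \<le> (kk / n) * ((R + u) * M2 * u + M1 * u + (M0 + (R + u) * M1) / l)"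
  proof -
    have "max z (z - u) * \<bar>f (z - u) - f z - (z - u - z) * f1 z\<bar> \<le> (R + \<bar>z - u - z\<bar>) * (M2 * (z - u - z)^2)"
      by (rule W1) (use z0 in auto)
    then have "z * \<bar>f (z - u) - f z + u * f1 z\<bar> \<le> (R + u) * (M2 * u^2)" using u0 by (simp add: max_def)
    then have "u * (kk * \<bar>f (z - u) - f z + u * f1 z\<bar>) \<le> u * ((R + u) * M2 * u)"
      by (simp add: zu power2_eq_square algebra_simps)
    then have e1: "kk * \<bar>f (z - u) - f z + u * f1 z\<bar> \<le> (R + u) * M2 * u" using u0 by simp
    have e2: "\<bar>f z - f (z - u)\<bar> \<le> M1 * u" using P0[of "z - u" z] z0 u0 by simp
    have e3: "\<bar>Na / l\<bar> \<le> (M0 + (R + u) * M1) / l" using Nab l by (simp add: divide_right_mono)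
    have NaE: "Na = kk * (f (z - u) - f z) - f (z - u)" unfolding Na_def by (simp add: algebra_simps)
    have i1: "((l - 1) / l) * Na = Na - Na / l" using l by (simp add: diff_divide_distrib left_diff_distrib)
    have i2: "Na + f z + z * f1 z = kk * (f (z - u) - f z + u * f1 z) + (f z - f (z - u))"
      unfolding NaE by (simp add: zu algebra_simps)
    have idt: "((l - 1) / l) * Na + f z + z * f1 z = kk * (f (z - u) - f z + u * f1 z) + (f z - f (z - u)) - Na / l"
      using i1 i2 by linarith
    have "\<bar>kk * (f (z - u) - f z + u * f1 z) + (f z - f (z - u)) - Na / l\<bar>
       \<le> kk * \<bar>f (z - u) - f z + u * f1 z\<bar> + \<bar>f z - f (z - u)\<bar> + \<bar>Na / l\<bar>"
      using k0 by (intro abs3) simp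
    then have "\<bar>((l - 1) / l) * Na + f z + z * f1 z\<bar> \<le> (R + u) * M2 * u + M1 * u + (M0 + (R + u) * M1) / l"
      using e1 e2 e3 idt by linarith
    then show ?thesis using kn' by (intro abs_scale) simp_all
  qed
  show "\<bar>(kk / n) * ((1 - kk / n) * (Na + Nb) / u - (z * f2 z + 2 * f1 z))\<bar>
           \<le> (kk / n) * (2 * (R + u) * M3 * u + (R * R * M2 + 2 * R * M1) / (d * l))"
  proof -
    define ep where "ep = f (z + u) - f z - u * f1 z - u^2 / 2 * f2 z"
    define em where "em = f (z - u) - f z + u * f1 z - u^2 / 2 * f2 z"
    have "max z (z + u) * \<bar>f (z + u) - f z - (z + u - z) * f1 z - (z + u - z)^2 / 2 * f2 z\<bar>
       \<le> (R + \<bar>z + u - z\<bar>) * (M3 * \<bar>z + u - z\<bar>^3)" by (rule W2) (use z0 in auto)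
    then have "(z + u) * \<bar>ep\<bar> \<le> (R + u) * (M3 * u^3)" using u0 unfolding ep_def by (simp add: max_def)
    then have "u * ((kk + 1) * \<bar>ep\<bar>) \<le> u * ((R + u) * M3 * u * u)"
      by (simp add: zu power3_eq_cube algebra_simps)
    then have ep1: "(kk + 1) * \<bar>ep\<bar> \<le> (R + u) * M3 * u * u" using u0 by simp
    have "max z (z - u) * \<bar>f (z - u) - f z - (z - u - z) * f1 z - (z - u - z)^2 / 2 * f2 z\<bar>
       \<le> (R + \<bar>z - u - z\<bar>) * (M3 * \<bar>z - u - z\<bar>^3)" by (rule W2) (use z0 in auto)
    then have "z * \<bar>em\<bar> \<le> (R + u) * (M3 * u^3)" using u0 unfolding em_def by (simp add: max_def)
    then have "u * (kk * \<bar>em\<bar>) \<le> u * ((R + u) * M3 * u * u)"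
      by (simp add: zu power3_eq_cube algebra_simps)
    then have "kk * \<bar>em\<bar> \<le> (R + u) * M3 * u * u" using u0 by simp
    moreover have "(kk - 1) * \<bar>em\<bar> \<le> kk * \<bar>em\<bar>" by (simp add: mult_right_mono)
    ultimately have em1: "(kk - 1) * \<bar>em\<bar> \<le> (R + u) * M3 * u * u" by linarith
    have fp: "f (z + u) = f z + u * f1 z + u^2 / 2 * f2 z + ep" by (simp add: ep_def)
    have fm: "f (z - u) = f z - u * f1 z + u^2 / 2 * f2 z + em" by (simp add: em_def)
    have idt: "Na + Nb = u * (z * f2 z + 2 * f1 z) + ((kk + 1) * ep + (kk - 1) * em)"
    proof -
      have "Na + Nb = (kk - 1) * (f z - u * f1 z + u^2 / 2 * f2 z + em) - kk * f z
           + ((kk + 1) * (f z + u * f1 z + u^2 / 2 * f2 z + ep) - kk * f z)"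
        unfolding Na_def Nb_def by (simp only: fp fm)
      also have "\<dots> = u * (u * kk * f2 z + 2 * f1 z) + ((kk + 1) * ep + (kk - 1) * em)"
        by (simp add: algebra_simps power2_eq_square add_divide_distrib[symmetric])
      finally show ?thesis by (simp add: zu)
    qed
    define E where "E = ((kk + 1) * ep + (kk - 1) * em) / u"
    have "\<bar>(kk + 1) * ep + (kk - 1) * em\<bar> \<le> (kk + 1) * \<bar>ep\<bar> + (kk - 1) * \<bar>em\<bar>"
      using k1 by (intro abs2) simp_all
    then have "\<bar>(kk + 1) * ep + (kk - 1) * em\<bar> \<le> u * (2 * (R + u) * M3 * u)" using ep1 em1 by (simp add: algebra_simps)
    then have Eb: "\<bar>E\<bar> \<le> 2 * (R + u) * M3 * u" unfolding E_def using u0 by (simp add: field_simps)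
    have q: "(Na + Nb) / u = (z * f2 z + 2 * f1 z) + E" unfolding idt E_def using u0 by (simp add: field_simps)
    have kz: "kk / n = z / (d * l)" unfolding zu using un n d l by (simp add: field_simps)
    have "\<bar>(z * z) * f2 z + (2 * z) * f1 z\<bar> \<le> (z * z) * \<bar>f2 z\<bar> + (2 * z) * \<bar>f1 z\<bar>"
      using z0 by (intro abs2) simp_all
    then have "\<bar>z * (z * f2 z + 2 * f1 z)\<bar> \<le> z * z * \<bar>f2 z\<bar> + 2 * (z * \<bar>f1 z\<bar>)"
      by (simp add: algebra_simps)
    then have "\<bar>z * (z * f2 z + 2 * f1 z)\<bar> \<le> R * R * M2 + 2 * R * M1" using S22[OF z0(1)] S1[OF z0(1)] by linarith
    then have F: "\<bar>(kk / n) * (z * f2 z + 2 * f1 z)\<bar> \<le> (R * R * M2 + 2 * R * M1) / (d * l)"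
      unfolding kz using d l by (simp add: abs_mult divide_right_mono)
    have "(1 - kk / n) * (Na + Nb) / u - (z * f2 z + 2 * f1 z) = (1 - kk / n) * E - (kk / n) * (z * f2 z + 2 * f1 z)"
    proof -
      have X: "(1 - kk / n) * (Na + Nb) / u = (1 - kk / n) * ((z * f2 z + 2 * f1 z) + E)"
        using q by (metis times_divide_eq_right)
      have "(1 - kk / n) * ((z * f2 z + 2 * f1 z) + E) - (z * f2 z + 2 * f1 z) = (1 - kk / n) * E - (kk / n) * (z * f2 z + 2 * f1 z)"
        by (simp add: algebra_simps)
      then show ?thesis using X by simp
    qed
    moreover have "\<bar>(1 - kk / n) * E\<bar> \<le> 2 * (R + u) * M3 * u"
    proof -
      have "\<bar>(1 - kk / n) * E\<bar> = (1 - kk / n) * \<bar>E\<bar>" using kn' by (simp add: abs_mult)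
      also have "\<dots> \<le> 1 * \<bar>E\<bar>" using kn' by (intro mult_right_mono) auto
      finally show ?thesis using Eb by linarith
    qed
    ultimately have "\<bar>(1 - kk / n) * (Na + Nb) / u - (z * f2 z + 2 * f1 z)\<bar> \<le> 2 * (R + u) * M3 * u + (R * R * M2 + 2 * R * M1) / (d * l)"
      using F by (smt (verit) abs_triangle_ineq4)
    then show ?thesis using kn' by (intro abs_scale) simp_all
  qed
qed


definition Kc :: "real \<Rightarrow> real \<Rightarrow> real \<Rightarrow> real" where
  "Kc l d u = 2 * (R + u) * M3 * u + (R * R * M2 + 2 * R * M1) / (d * l) + (R + u) * M2 * u + M1 * u
     + 2 * ((M0 + (R + u) * M1) / l) + 2 * M1 * d"

lemma site:
  fixes n l d u :: real and k :: nat
  assumes n: "n > 0" and l: "l > 0" and d: "d > 0" and un: "u * n = d * l" and u1: "u \<le> 1"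
    and kn: "real k \<le> n"
  defines "gg \<equiv> \<lambda>j::nat. (real j / n) * f (u * real j)"
  shows "\<bar>real k * (n - real k) * ((gg (k - 1) - gg k) + (gg (k + 1) - gg k))
      + d * (l - 1) * real k * (gg (k - 1) - gg k) - d * real k * (gg (k + 1) - gg k) + d * n * (gg (k + 1) - gg k)
      - (d * l * (real k / n) * ((u * real k) * f2 (u * real k) + (2 - u * real k) * f1 (u * real k) - f (u * real k)) + d * f 0)\<bar>
      \<le> d * l * ((real k / n) * Kc l d u + M1 * u / l)"
proof (cases "k = 0")
  case True
  have u0: "u > 0" using un n d l by (metis mult_pos_pos zero_less_mult_pos2)
  have "\<bar>f u - f 0\<bar> \<le> M1 * u" using P0[of 0 u] u0 by simp
  then have "d * \<bar>f u - f 0\<bar> \<le> d * (M1 * u)" using d by (intro mult_left_mono) auto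
  moreover have "d * \<bar>f u - f 0\<bar> = \<bar>d * f u - d * f 0\<bar>" using d by (metis abs_mult abs_of_pos right_diff_distrib)
  ultimately have e: "\<bar>d * f u - d * f 0\<bar> \<le> d * (M1 * u)" by simp
  show ?thesis using True n l e by (simp add: gg_def)
next
  case False
  then have k1: "real k \<ge> 1" by simp
  define kk where "kk = real k"
  define z where "z = u * kk"
  define Na where "Na = (kk - 1) * f (z - u) - kk * f z"
  define Nb where "Nb = (kk + 1) * f (z + u) - kk * f z"
  have u0: "u > 0" using un n d l by (metis mult_pos_pos zero_less_mult_pos2)
  have ga: "gg (k - 1) - gg k = Na / n"
  proof -
    have "real (k - 1) = kk - 1" using False by (simp add: kk_def of_nat_diff)
    moreover have "u * (kk - 1) = z - u" by (simp add: z_def algebra_simps)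
    ultimately show ?thesis unfolding gg_def Na_def using n by (simp add: kk_def z_def field_simps)
  qed
  have gb: "gg (k + 1) - gg k = Nb / n"
  proof -
    have "u * (kk + 1) = z + u" by (simp add: z_def algebra_simps)
    then show ?thesis unfolding gg_def Nb_def using n by (simp add: kk_def z_def field_simps)
  qed
  have ue: "u = d * l / n" using un n by (simp add: field_simps)
  have B: "\<bar>(kk / n) * ((1 - kk / n) * (Na + Nb) / u - (z * f2 z + 2 * f1 z))\<bar>
           \<le> (kk / n) * (2 * (R + u) * M3 * u + (R * R * M2 + 2 * R * M1) / (d * l))"
    "\<bar>(kk / n) * (((l - 1) / l) * Na + f z + z * f1 z)\<bar>
           \<le> (kk / n) * ((R + u) * M2 * u + M1 * u + (M0 + (R + u) * M1) / l)"
    "\<bar>(kk / n) * Nb / l\<bar> \<le> (kk / n) * ((M0 + (R + u) * M1) / l)"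
    "\<bar>(Nb - f 0) / l\<bar> \<le> (kk / n) * (2 * M1 * d) + M1 * u / l"
    using site_k1[OF n l d un u1, of kk] k1 kn unfolding kk_def z_def Na_def Nb_def by auto
  have I: "kk * (n - kk) * (Na / n + Nb / n) + d * (l - 1) * kk * (Na / n) - d * kk * (Nb / n) + d * n * (Nb / n)
     - (d * l * (kk / n) * (z * f2 z + (2 - z) * f1 z - f z) + d * f 0)
   = d * l * ((kk / n) * ((1 - kk / n) * (Na + Nb) / u - (z * f2 z + 2 * f1 z))
      + (kk / n) * (((l - 1) / l) * Na + f z + z * f1 z) - (kk / n) * Nb / l + (Nb - f 0) / l)"
    by (rule site_ident[OF n l d ue])
  have "\<bar>(kk / n) * ((1 - kk / n) * (Na + Nb) / u - (z * f2 z + 2 * f1 z))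
      + (kk / n) * (((l - 1) / l) * Na + f z + z * f1 z) - (kk / n) * Nb / l + (Nb - f 0) / l\<bar>
     \<le> (kk / n) * Kc l d u + M1 * u / l"
  proof -
    have "(kk / n) * Kc l d u + M1 * u / l = (kk / n) * (2 * (R + u) * M3 * u + (R * R * M2 + 2 * R * M1) / (d * l))
       + (kk / n) * ((R + u) * M2 * u + M1 * u + (M0 + (R + u) * M1) / l)
       + (kk / n) * ((M0 + (R + u) * M1) / l) + ((kk / n) * (2 * M1 * d) + M1 * u / l)"
      unfolding Kc_def by (simp add: algebra_simps)
    moreover note abs4[of "(kk / n) * ((1 - kk / n) * (Na + Nb) / u - (z * f2 z + 2 * f1 z))"
      "(kk / n) * (((l - 1) / l) * Na + f z + z * f1 z)" "(kk / n) * Nb / l" "(Nb - f 0) / l"]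
    ultimately show ?thesis using B by linarith
  qed
  then have "\<bar>d * l * ((kk / n) * ((1 - kk / n) * (Na + Nb) / u - (z * f2 z + 2 * f1 z))
      + (kk / n) * (((l - 1) / l) * Na + f z + z * f1 z) - (kk / n) * Nb / l + (Nb - f 0) / l)\<bar>
     \<le> d * l * ((kk / n) * Kc l d u + M1 * u / l)"
    using d l by (intro abs_scale) auto
  then show ?thesis unfolding ga gb using I by (simp add: kk_def z_def)
qed

end


lemma jump_sum:
  fixes G :: "nat \<Rightarrow> real"
  assumes "x < L" "y < L" "x \<noteq> y"
  shows "(\<Sum>z<L. G (jump \<eta> x y z)) = (\<Sum>z<L. G (\<eta> z)) + (G (\<eta> x - 1) - G (\<eta> x)) + (G (\<eta> y + 1) - G (\<eta> y))"
proof -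
  have e: "G (jump \<eta> x y z) - G (\<eta> z) = (if z = x then G (\<eta> x - 1) - G (\<eta> x) else 0) + (if z = y then G (\<eta> y + 1) - G (\<eta> y) else 0)" for z
    using assms(3) by (auto simp: jump_def)
  have "(\<Sum>z<L. G (jump \<eta> x y z)) - (\<Sum>z<L. G (\<eta> z)) = (\<Sum>z<L. G (jump \<eta> x y z) - G (\<eta> z))"
    by (simp add: sum_subtractf)
  also have "\<dots> = (\<Sum>z<L. (if z = x then G (\<eta> x - 1) - G (\<eta> x) else 0)) + (\<Sum>z<L. (if z = y then G (\<eta> y + 1) - G (\<eta> y) else 0))"
    unfolding e by (simp add: sum.distrib)
  also have "\<dots> = (G (\<eta> x - 1) - G (\<eta> x)) + (G (\<eta> y + 1) - G (\<eta> y))"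
    using assms by simp
  finally show ?thesis by linarith
qed

lemma Omega_sum: "\<eta> \<in> Omega L N \<Longrightarrow> (\<Sum>x<L. real (\<eta> x)) = real N"
  unfolding Omega_def by (simp flip: of_nat_sum)

lemma Omega_le: "\<eta> \<in> Omega L N \<Longrightarrow> x < L \<Longrightarrow> \<eta> x \<le> N"
  unfolding Omega_def using member_le_sum[of x "{..<L}" \<eta>] by auto

lemma gen_sites:
  fixes G :: "nat \<Rightarrow> real"
  assumes om: "\<eta> \<in> Omega L N"
  defines "A \<equiv> \<lambda>x. G (\<eta> x - 1) - G (\<eta> x)" and "B \<equiv> \<lambda>x. G (\<eta> x + 1) - G (\<eta> x)"
  shows "gen L d (\<lambda>\<xi>. \<Sum>z<L. G (\<xi> z)) \<eta> = (\<Sum>x<L. real (\<eta> x) * (real N - real (\<eta> x)) * (A x + B x)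
     + d * (real L - 1) * real (\<eta> x) * A x - d * real (\<eta> x) * B x + d * real N * B x)"
proof -
  define SB where "SB = (\<Sum>y<L. B y)"
  define SeB where "SeB = (\<Sum>y<L. real (\<eta> y) * B y)"
  have sN: "(\<Sum>y<L. real (\<eta> y)) = real N" by (rule Omega_sum[OF om])
  have s1: "gen L d (\<lambda>\<xi>. \<Sum>z<L. G (\<xi> z)) \<eta> = (\<Sum>x<L. \<Sum>y\<in>{..<L} - {x}. real (\<eta> x) * (d + real (\<eta> y)) * (A x + B y))"
    unfolding gen_def
  proof (intro sum.cong refl)
    fix x y assume "x \<in> {..<L}" "y \<in> {..<L} - {x}"
    then show "real (\<eta> x) * (d + real (\<eta> y)) * ((\<Sum>z<L. G (jump \<eta> x y z)) - (\<Sum>z<L. G (\<eta> z))) =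
       real (\<eta> x) * (d + real (\<eta> y)) * (A x + B y)"
      using jump_sum[of x L y G \<eta>] by (simp add: A_def B_def)
  qed
  have full: "(\<Sum>y<L. real (\<eta> x) * (d + real (\<eta> y)) * (A x + B y)) =
      real (\<eta> x) * (d * real L * A x + d * SB + real N * A x + SeB)" for x
  proof -
    have "(\<Sum>y<L. real (\<eta> x) * (d + real (\<eta> y)) * (A x + B y)) =
        (\<Sum>y<L. real (\<eta> x) * (d * A x) + real (\<eta> x) * d * B y + real (\<eta> x) * A x * real (\<eta> y) + real (\<eta> x) * (real (\<eta> y) * B y))"
      by (rule sum.cong) (simp_all add: algebra_simps)
    also have "\<dots> = real L * (real (\<eta> x) * (d * A x)) + real (\<eta> x) * d * SB + real (\<eta> x) * A x * real N + real (\<eta> x) * SeB"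
      by (simp add: sum.distrib SB_def SeB_def sum_distrib_left[symmetric] sN)
    finally show ?thesis by (simp add: algebra_simps)
  qed
  have s2: "(\<Sum>y\<in>{..<L} - {x}. real (\<eta> x) * (d + real (\<eta> y)) * (A x + B y)) =
      real (\<eta> x) * (d * real L * A x + d * SB + real N * A x + SeB) - real (\<eta> x) * (d + real (\<eta> x)) * (A x + B x)"
    if "x < L" for x
    using that by (simp add: sum_diff1 full)
  have s3: "gen L d (\<lambda>\<xi>. \<Sum>z<L. G (\<xi> z)) \<eta> = (\<Sum>x<L. real (\<eta> x) * (d * real L * A x + d * SB + real N * A x + SeB) - real (\<eta> x) * (d + real (\<eta> x)) * (A x + B x))"
    unfolding s1 by (rule sum.cong) (simp_all add: s2)
  let ?E1 = "\<lambda>x. real (\<eta> x) * (d * real L * A x + d * SB + real N * A x + SeB) - real (\<eta> x) * (d + real (\<eta> x)) * (A x + B x)"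
  let ?E2 = "\<lambda>x. real (\<eta> x) * (real N - real (\<eta> x)) * (A x + B x)
     + d * (real L - 1) * real (\<eta> x) * A x - d * real (\<eta> x) * B x + d * real N * B x"
  have "(\<Sum>x<L. ?E1 x) - (\<Sum>x<L. ?E2 x) = (\<Sum>x<L. real (\<eta> x) * (d * SB + SeB) - d * real N * B x - real N * (real (\<eta> x) * B x))"
    by (simp add: sum_subtractf[symmetric]) (rule sum.cong, simp_all add: algebra_simps)
  also have "\<dots> = real N * (d * SB + SeB) - d * real N * SB - real N * SeB"
    by (simp add: sum_subtractf sum_distrib_right[symmetric] sum_distrib_left[symmetric] sN SB_def SeB_def)
  also have "\<dots> = 0" by (simp add: algebra_simps)
  finally show ?thesis unfolding s3 by simp
qed


lemma D1_eq:
  assumes "r > 0" "(g has_real_derivative D) (at r within {0..})"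
  shows "D1 g r = D"
proof -
  have a: "(g has_real_derivative D) (at r)" using assms deriv_within_pos by blast
  show ?thesis unfolding D1_def
  proof (rule some_equality)
    show "(g has_real_derivative D) (at r within {0..})" by fact
    fix E assume "(g has_real_derivative E) (at r within {0..})"
    then have "(g has_real_derivative E) (at r)" using assms deriv_within_pos by blast
    then show "E = D" using a DERIV_unique by blast
  qed
qed

context c3f begin

lemma D1f: "r > 0 \<Longrightarrow> D1 f r = f1 r"
  using D1_eq d1 by simp

lemma D1D1f: "r > 0 \<Longrightarrow> D1 (D1 f) r = f2 r"
proof -
  assume r: "r > 0"
  have a: "(f1 has_real_derivative f2 r) (at r)" using d2[of r] r deriv_within_pos by auto
  have "(D1 f has_real_derivative f2 r) (at r)"
    by (rule has_field_derivative_transform_within_open[OF a, of "{0<..}"]) (use r D1f in auto)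
  then show ?thesis using D1_eq r at_within_pos by (simp add: at_within_pos)
qed

end

lemma Ahat_pos:
  assumes "c3f (hr h) f1 f2 f3 R" "r > 0"
  shows "Ahat h (ennreal r) = r * f2 r + (2 - r) * f1 r + (hr h 0 - hr h r)"
proof -
  interpret c3f "hr h" f1 f2 f3 R by fact
  have "h 0 = hr h 0" by (simp add: hr_def)
  moreover have "h (ennreal r) = hr h r" by (simp add: hr_def)
  ultimately show ?thesis unfolding Ahat_def using assms(2) D1f D1D1f by (simp add: Let_def)
qed

lemma emp_gg:
  assumes "N > 0"
  shows "emp L N d \<xi> h = (\<Sum>x<L. (\<lambda>j::nat. (real j / real N) * hr h (d * real L / real N * real j)) (\<xi> x))"
  unfolding emp_def hr_def by (simp add: field_simps)

lemma emp_Ahat: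
  assumes "c3f (hr h) f1 f2 f3 R" "N > 0" "d > 0" "L > 0"
  shows "d * real L * emp L N d \<eta> (Ahat h) = (\<Sum>x<L. d * real L * (real (\<eta> x) / real N) *
     ((d * real L / real N * real (\<eta> x)) * f2 (d * real L / real N * real (\<eta> x))
      + (2 - d * real L / real N * real (\<eta> x)) * f1 (d * real L / real N * real (\<eta> x))
      + (hr h 0 - hr h (d * real L / real N * real (\<eta> x)))))"
  unfolding emp_def sum_distrib_left
proof (rule sum.cong[OF refl])
  fix x
  show "d * real L * (real (\<eta> x) / real N * Ahat h (ennreal (d * real L * real (\<eta> x) / real N))) =
       d * real L * (real (\<eta> x) / real N) *
       (d * real L / real N * real (\<eta> x) * f2 (d * real L / real N * real (\<eta> x)) +
        (2 - d * real L / real N * real (\<eta> x)) * f1 (d * real L / real N * real (\<eta> x)) +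
        (hr h 0 - hr h (d * real L / real N * real (\<eta> x))))"
  proof (cases "\<eta> x = 0")
    case False
    have p: "d * real L / real N * real (\<eta> x) > 0" using False assms by simp
    have e: "d * real L * real (\<eta> x) / real N = d * real L / real N * real (\<eta> x)" by simp
    show ?thesis unfolding e Ahat_pos[OF assms(1) p] by simp
  qed simp
qed


context c3fb begin

lemma main_bound:
  assumes hf: "hr h = f" and om: "\<eta> \<in> Omega L N" and N: "N > 0" and L: "L > 0" and d: "d > 0"
    and u1: "d * real L / real N \<le> 1"
  shows "\<bar>gen L d (\<lambda>\<xi>. emp L N d \<xi> h) \<eta> / (d * real L) - emp L N d \<eta> (Ahat h)\<bar>
     \<le> Kc (real L) d (d * real L / real N) + M1 * (d * real L / real N)"
proof -
  define u where "u = d * real L / real N"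
  define n where "n = real N"
  define l where "l = real L"
  define gg where "gg = (\<lambda>j::nat. (real j / n) * f (u * real j))"
  have n0: "n > 0" "l > 0" using N L by (auto simp: n_def l_def)
  have un: "u * n = d * l" using N by (simp add: u_def n_def l_def)
  have u1': "u \<le> 1" using u1 by (simp add: u_def)
  have empg: "emp L N d \<xi> h = (\<Sum>x<L. gg (\<xi> x))" for \<xi>
    unfolding emp_gg[OF N] gg_def hf u_def n_def by simp
  define S where "S = (\<lambda>x. real (\<eta> x) * (n - real (\<eta> x)) * ((gg (\<eta> x - 1) - gg (\<eta> x)) + (gg (\<eta> x + 1) - gg (\<eta> x)))
     + d * (l - 1) * real (\<eta> x) * (gg (\<eta> x - 1) - gg (\<eta> x)) - d * real (\<eta> x) * (gg (\<eta> x + 1) - gg (\<eta> x))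
     + d * n * (gg (\<eta> x + 1) - gg (\<eta> x)))"
  define W where "W = (\<lambda>x. (u * real (\<eta> x)) * f2 (u * real (\<eta> x)) + (2 - u * real (\<eta> x)) * f1 (u * real (\<eta> x)) - f (u * real (\<eta> x)))"
  define Tg where "Tg = (\<lambda>x. d * l * (real (\<eta> x) / n) * W x + d * f 0)"
  have genS: "gen L d (\<lambda>\<xi>. emp L N d \<xi> h) \<eta> = (\<Sum>x<L. S x)"
    unfolding empg gen_sites[OF om] S_def n_def l_def by simp
  have c3: "c3f (hr h) f1 f2 f3 R" using hf c3f_axioms by simp
  have empA: "d * l * emp L N d \<eta> (Ahat h) = (\<Sum>x<L. d * l * (real (\<eta> x) / n) * (W x + f 0))"
    unfolding l_def emp_Ahat[OF c3 N d L] W_def hf u_def n_def by (simp add: algebra_simps)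
  have sN: "(\<Sum>x<L. real (\<eta> x)) = n" using Omega_sum[OF om] by (simp add: n_def)
  have "(\<Sum>x<L. d * l * (real (\<eta> x) / n) * (W x + f 0)) - (\<Sum>x<L. Tg x)
      = (\<Sum>x<L. (d * l * f 0 / n) * real (\<eta> x) - d * f 0)"
    unfolding Tg_def sum_subtractf[symmetric] by (rule sum.cong) (simp_all add: algebra_simps, metis add_divide_distrib)
  also have "\<dots> = (d * l * f 0 / n) * n - l * (d * f 0)"
  proof -
    define C where "C = d * l * f 0 / n"
    define D where "D = d * f 0"
    have "(\<Sum>x<L. C * real (\<eta> x) - D) = (\<Sum>x<L. C * real (\<eta> x)) - (\<Sum>x<L. D)" by (rule sum_subtractf)
    also have "\<dots> = C * n - l * D" by (simp only: sum_distrib_left[symmetric] sN sum_constant card_lessThan l_def)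
    finally show ?thesis unfolding C_def D_def .
  qed
  also have "\<dots> = 0" using n0 by simp
  finally have TgS: "(\<Sum>x<L. Tg x) = d * l * emp L N d \<eta> (Ahat h)" using empA by simp
  have site_x: "\<bar>S x - Tg x\<bar> \<le> d * l * ((real (\<eta> x) / n) * Kc l d u + M1 * u / l)" if "x < L" for x
  proof -
    have kn: "real (\<eta> x) \<le> n" using Omega_le[OF om that] by (simp add: n_def)
    show ?thesis using site[OF n0(1) n0(2) d un u1' kn] unfolding S_def Tg_def W_def gg_def by simp
  qed
  have "\<bar>(\<Sum>x<L. S x) - (\<Sum>x<L. Tg x)\<bar> \<le> (\<Sum>x<L. \<bar>S x - Tg x\<bar>)"
    by (simp add: sum_subtractf[symmetric] sum_abs)
  also have "\<dots> \<le> (\<Sum>x<L. d * l * ((real (\<eta> x) / n) * Kc l d u + M1 * u / l))"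
    by (rule sum_mono) (rule site_x, simp)
  also have "\<dots> = d * l * (Kc l d u + M1 * u)"
  proof -
    define C where "C = d * l * Kc l d u / n"
    define D where "D = d * l * (M1 * u / l)"
    have "(\<Sum>x<L. d * l * ((real (\<eta> x) / n) * Kc l d u + M1 * u / l)) = (\<Sum>x<L. C * real (\<eta> x) + D)"
      unfolding C_def D_def by (rule sum.cong) (simp_all add: algebra_simps)
    also have "\<dots> = (\<Sum>x<L. C * real (\<eta> x)) + (\<Sum>x<L. D)" by (rule sum.distrib)
    also have "\<dots> = C * n + l * D" by (simp only: sum_distrib_left[symmetric] sN sum_constant card_lessThan l_def)
    also have "\<dots> = d * l * (Kc l d u + M1 * u)" unfolding C_def D_def using n0 by (simp add: field_simps)
    finally show ?thesis .
  qed
  finally have "\<bar>gen L d (\<lambda>\<xi>. emp L N d \<xi> h) \<eta> - d * l * emp L N d \<eta> (Ahat h)\<bar> \<le> d * l * (Kc l d u + M1 * u)"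
    unfolding genS TgS .
  then have "\<bar>gen L d (\<lambda>\<xi>. emp L N d \<xi> h) \<eta> - d * l * emp L N d \<eta> (Ahat h)\<bar> / (d * l) \<le> Kc l d u + M1 * u"
    using d n0 by (simp add: divide_le_eq mult.commute)
  moreover have "\<bar>gen L d (\<lambda>\<xi>. emp L N d \<xi> h) \<eta> - d * l * emp L N d \<eta> (Ahat h)\<bar> / (d * l)
     = \<bar>gen L d (\<lambda>\<xi>. emp L N d \<xi> h) \<eta> / (d * l) - emp L N d \<eta> (Ahat h)\<bar>"
    using d n0 by (simp add: field_simps)
  ultimately show ?thesis by (simp add: l_def u_def)
qed

end


lemma jump_Omega:
  assumes om: "\<eta> \<in> Omega L N" and "x < L" "y < L" "x \<noteq> y" "0 < \<eta> x"
  shows "jump \<eta> x y \<in> Omega L N"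
proof -
  have "(\<Sum>z<L. real (jump \<eta> x y z)) = (\<Sum>z<L. real (\<eta> z)) + (real (\<eta> x - 1) - real (\<eta> x)) + (real (\<eta> y + 1) - real (\<eta> y))"
    by (rule jump_sum) (use assms in auto)
  also have "\<dots> = real N" using Omega_sum[OF om] assms(5) by (simp add: of_nat_diff)
  finally have "real (\<Sum>z<L. jump \<eta> x y z) = real N" by simp
  then have "(\<Sum>z<L. jump \<eta> x y z) = N" by (simp only: of_nat_eq_iff)
  moreover have "\<forall>z\<ge>L. jump \<eta> x y z = 0" using om assms(2,3) by (auto simp: Omega_def jump_def)
  ultimately show ?thesis by (simp add: Omega_def)
qed

lemma gen_add: "gen L d (\<lambda>\<xi>. f \<xi> + g \<xi>) \<eta> = gen L d f \<eta> + gen L d g \<eta>"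
  unfolding gen_def by (simp add: sum.distrib[symmetric] algebra_simps)

lemma gen_scale: "gen L d (\<lambda>\<xi>. c * f \<xi>) \<eta> = c * gen L d f \<eta>"
  unfolding gen_def by (simp add: sum_distrib_left algebra_simps)

lemma gen_zero: "gen L d (\<lambda>\<xi>. 0) \<eta> = 0"
  unfolding gen_def by simp

lemma gen_mult: "gen L d (\<lambda>\<xi>. f \<xi> * g \<xi>) \<eta> = f \<eta> * gen L d g \<eta> + g \<eta> * gen L d f \<eta>
   + (\<Sum>x<L. \<Sum>y\<in>{..<L} - {x}. real (\<eta> x) * (d + real (\<eta> y)) * ((f (jump \<eta> x y) - f \<eta>) * (g (jump \<eta> x y) - g \<eta>)))"
  unfolding gen_def by (simp add: sum_distrib_left sum.distrib[symmetric] algebra_simps)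

lemma rate_sum:
  assumes om: "\<eta> \<in> Omega L N" and d: "d \<ge> 0"
  shows "(\<Sum>x<L. \<Sum>y\<in>{..<L} - {x}. real (\<eta> x) * (d + real (\<eta> y))) \<le> real N * (d * real L + real N)"
proof -
  have "(\<Sum>x<L. \<Sum>y\<in>{..<L} - {x}. real (\<eta> x) * (d + real (\<eta> y))) \<le> (\<Sum>x<L. \<Sum>y<L. real (\<eta> x) * (d + real (\<eta> y)))"
    by (intro sum_mono sum_mono2) (use d in auto)
  also have "\<dots> = (\<Sum>x<L. real (\<eta> x) * (d * real L + real N))"
    by (simp add: sum_distrib_left[symmetric] sum.distrib Omega_sum[OF om] ac_simps)
  also have "\<dots> = real N * (d * real L + real N)"
    by (simp add: sum_distrib_right[symmetric] Omega_sum[OF om])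
  finally show ?thesis .
qed

lemma prod_nth_list: "(\<Prod>m<length hs. mu (hs ! m)) = prod_list (map mu hs)"
  by (induction hs) (simp_all add: prod.lessThan_Suc_shift del: prod.lessThan_Suc)

lemma prod_minus_Suc:
  "(\<Prod>m\<in>{..<Suc n} - {Suc k}. F m) = F 0 * (\<Prod>m\<in>{..<n} - {k}. F (Suc m))"
proof -
  have "{..<Suc n} - {Suc k} = insert 0 (Suc ` ({..<n} - {k}))"
  proof (rule set_eqI)
    fix m show "m \<in> {..<Suc n} - {Suc k} \<longleftrightarrow> m \<in> insert 0 (Suc ` ({..<n} - {k}))"
      by (cases m) auto
  qed
  then show ?thesis by (simp add: prod.reindex)
qed

fun gterm :: "(ennreal \<Rightarrow> real) list \<Rightarrow> ((ennreal \<Rightarrow> real) \<Rightarrow> real) \<Rightarrow> real" where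
  "gterm [] mu = 0"
| "gterm (h # hs) mu = mu (Ahat h) * prod_list (map mu hs) + mu h * gterm hs mu"

lemma gterm_eq: "gterm hs mu = (\<Sum>k<length hs. mu (Ahat (hs ! k)) * (\<Prod>m\<in>{..<length hs} - {k}. mu (hs ! m)))"
proof (induction hs)
  case Nil then show ?case by simp
next
  case (Cons h hs)
  define n where "n = length hs"
  define F where "F = (\<lambda>k. mu (Ahat ((h # hs) ! k)) * (\<Prod>m\<in>{..<Suc n} - {k}. mu ((h # hs) ! m)))"
  have p0: "{..<Suc n} - {0} = Suc ` {..<n}"
  proof (rule set_eqI)
    fix m show "m \<in> {..<Suc n} - {0} \<longleftrightarrow> m \<in> Suc ` {..<n}" by (cases m) auto
  qed
  have F0: "F 0 = mu (Ahat h) * prod_list (map mu hs)"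
  proof -
    have "(\<Prod>m\<in>{..<Suc n} - {0}. mu ((h # hs) ! m)) = (\<Prod>m<n. mu (hs ! m))"
      unfolding p0 by (simp add: prod.reindex)
    then show ?thesis unfolding F_def n_def by (simp add: prod_nth_list)
  qed
  have FS: "F (Suc k) = mu h * (mu (Ahat (hs ! k)) * (\<Prod>m\<in>{..<n} - {k}. mu (hs ! m)))" for k
    unfolding F_def prod_minus_Suc by simp
  have s1: "(\<Sum>k<Suc n. F k) = F 0 + (\<Sum>k<n. F (Suc k))" by (rule sum.lessThan_Suc_shift)
  have s2: "(\<Sum>k<n. F (Suc k)) = mu h * gterm hs mu"
    unfolding FS Cons.IH n_def by (simp add: sum_distrib_left)
  have "gterm (h # hs) mu = (\<Sum>k<Suc n. F k)" unfolding s1 s2 F0 by simp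
  then show ?case unfolding F_def n_def by simp
qed

lemma evalH_Nil: "evalH [] mu = 0" by (simp add: evalH_def)
lemma evalH_Cons: "evalH ((c, hs) # P) mu = c * prod_list (map mu hs) + evalH P mu" by (simp add: evalH_def)
lemma genH_Nil: "genH [] mu = 0" by (simp add: genH_def)
lemma genH_Cons: "genH ((c, hs) # P) mu = c * gterm hs mu + genH P mu" by (simp add: genH_def gterm_eq)


definition evr :: "real \<Rightarrow> (nat \<Rightarrow> nat \<Rightarrow> bool) \<Rightarrow> bool" where
  "evr \<rho> P \<longleftrightarrow> (\<exists>\<delta>>0. \<exists>L0. \<forall>L N. L \<ge> L0 \<and> \<bar>real N / real L - \<rho>\<bar> < \<delta> \<longrightarrow> P L N)"

lemma evr_conj: "evr \<rho> P \<Longrightarrow> evr \<rho> Q \<Longrightarrow> evr \<rho> (\<lambda>L N. P L N \<and> Q L N)"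
proof -
  assume "evr \<rho> P" "evr \<rho> Q"
  then obtain d1 L1 d2 L2 where "d1 > 0" "\<forall>L N. L \<ge> L1 \<and> \<bar>real N / real L - \<rho>\<bar> < d1 \<longrightarrow> P L N"
    "d2 > 0" "\<forall>L N. L \<ge> L2 \<and> \<bar>real N / real L - \<rho>\<bar> < d2 \<longrightarrow> Q L N"
    unfolding evr_def by blast
  then show ?thesis unfolding evr_def
    by (intro exI[of _ "min d1 d2"] conjI exI[of _ "max L1 L2"]) auto
qed

lemma evr_mono: "evr \<rho> P \<Longrightarrow> (\<And>L N. P L N \<Longrightarrow> Q L N) \<Longrightarrow> evr \<rho> Q"
  unfolding evr_def by blast

lemma evr_seq: "eventually Q sequentially \<Longrightarrow> evr \<rho> (\<lambda>L N. Q L)"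
  unfolding evr_def eventually_sequentially by (intro exI[of _ 1]) auto

lemma evr_ratio:
  assumes "\<rho> > 0"
  shows "evr \<rho> (\<lambda>L N. L > 0 \<and> \<rho> / 2 * real L < real N \<and> real N < 2 * \<rho> * real L)"
proof -
  have *: "\<forall>L N. 1 \<le> L \<and> \<bar>real N / real L - \<rho>\<bar> < \<rho> / 2 \<longrightarrow> (L > 0 \<and> \<rho> / 2 * real L < real N \<and> real N < 2 * \<rho> * real L)"
  proof (intro allI impI)
    fix L N :: nat assume a: "1 \<le> L \<and> \<bar>real N / real L - \<rho>\<bar> < \<rho> / 2"
    then have L: "real L > 0" by simp
    have b: "- (\<rho> / 2) < real N / real L - \<rho> \<and> real N / real L - \<rho> < \<rho> / 2" using a by arith
    have "\<rho> / 2 < real N / real L" "real N / real L < 2 * \<rho>" using b assms by linarith+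
    then show "L > 0 \<and> \<rho> / 2 * real L < real N \<and> real N < 2 * \<rho> * real L"
      using L a by (simp add: pos_less_divide_eq pos_divide_less_eq mult.commute)
  qed
  show ?thesis unfolding evr_def using assms * by (intro exI[of _ "\<rho> / 2"] conjI exI[of _ "1::nat"]) auto
qed

definition zq :: "real \<Rightarrow> (nat \<Rightarrow> nat \<Rightarrow> real) \<Rightarrow> bool" where
  "zq \<rho> q \<longleftrightarrow> (\<forall>\<epsilon>>0. evr \<rho> (\<lambda>L N. \<bar>q L N\<bar> \<le> \<epsilon>))"

definition small :: "real \<Rightarrow> (nat \<Rightarrow> nat \<Rightarrow> (nat \<Rightarrow> nat) \<Rightarrow> real) \<Rightarrow> bool" where
  "small \<rho> E \<longleftrightarrow> (\<forall>\<epsilon>>0. evr \<rho> (\<lambda>L N. \<forall>\<eta>\<in>Omega L N. \<bar>E L N \<eta>\<bar> \<le> \<epsilon>))"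

lemma zq_add: "zq \<rho> p \<Longrightarrow> zq \<rho> q \<Longrightarrow> zq \<rho> (\<lambda>L N. p L N + q L N)"
  unfolding zq_def
proof (intro allI impI)
  fix \<epsilon> :: real assume "\<forall>\<epsilon>>0. evr \<rho> (\<lambda>L N. \<bar>p L N\<bar> \<le> \<epsilon>)" "\<forall>\<epsilon>>0. evr \<rho> (\<lambda>L N. \<bar>q L N\<bar> \<le> \<epsilon>)" "\<epsilon> > 0"
  moreover have "\<epsilon> / 2 > 0" using \<open>\<epsilon> > 0\<close> by simp
  ultimately have "evr \<rho> (\<lambda>L N. \<bar>p L N\<bar> \<le> \<epsilon> / 2)" "evr \<rho> (\<lambda>L N. \<bar>q L N\<bar> \<le> \<epsilon> / 2)" by blast+
  from evr_conj[OF this] show "evr \<rho> (\<lambda>L N. \<bar>p L N + q L N\<bar> \<le> \<epsilon>)" by (rule evr_mono) auto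
qed

lemma zq_scale: "zq \<rho> q \<Longrightarrow> zq \<rho> (\<lambda>L N. c * q L N)"
  unfolding zq_def
proof (intro allI impI)
  fix \<epsilon> :: real assume a: "\<forall>\<epsilon>>0. evr \<rho> (\<lambda>L N. \<bar>q L N\<bar> \<le> \<epsilon>)" "\<epsilon> > 0"
  then have "evr \<rho> (\<lambda>L N. \<bar>q L N\<bar> \<le> \<epsilon> / (\<bar>c\<bar> + 1))" by auto
  then show "evr \<rho> (\<lambda>L N. \<bar>c * q L N\<bar> \<le> \<epsilon>)"
  proof (rule evr_mono)
    fix L N assume "\<bar>q L N\<bar> \<le> \<epsilon> / (\<bar>c\<bar> + 1)"
    then have "(\<bar>c\<bar> + 1) * \<bar>q L N\<bar> \<le> \<epsilon>" by (simp add: field_simps)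
    moreover have "\<bar>c * q L N\<bar> \<le> (\<bar>c\<bar> + 1) * \<bar>q L N\<bar>" by (simp add: abs_mult mult_right_mono)
    ultimately show "\<bar>c * q L N\<bar> \<le> \<epsilon>" by linarith
  qed
qed

lemma zq_le: "zq \<rho> q \<Longrightarrow> evr \<rho> (\<lambda>L N. \<bar>p L N\<bar> \<le> q L N) \<Longrightarrow> zq \<rho> p"
  unfolding zq_def
proof (intro allI impI)
  fix \<epsilon> :: real assume "\<forall>\<epsilon>>0. evr \<rho> (\<lambda>L N. \<bar>q L N\<bar> \<le> \<epsilon>)" "evr \<rho> (\<lambda>L N. \<bar>p L N\<bar> \<le> q L N)" "\<epsilon> > 0"
  then have "evr \<rho> (\<lambda>L N. \<bar>q L N\<bar> \<le> \<epsilon>)" "evr \<rho> (\<lambda>L N. \<bar>p L N\<bar> \<le> q L N)" by auto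
  from evr_conj[OF this] show "evr \<rho> (\<lambda>L N. \<bar>p L N\<bar> \<le> \<epsilon>)" by (rule evr_mono) auto
qed

lemma small_add: "small \<rho> E \<Longrightarrow> small \<rho> F \<Longrightarrow> small \<rho> (\<lambda>L N \<eta>. E L N \<eta> + F L N \<eta>)"
  unfolding small_def
proof (intro allI impI)
  fix \<epsilon> :: real assume "\<forall>\<epsilon>>0. evr \<rho> (\<lambda>L N. \<forall>\<eta>\<in>Omega L N. \<bar>E L N \<eta>\<bar> \<le> \<epsilon>)"
    "\<forall>\<epsilon>>0. evr \<rho> (\<lambda>L N. \<forall>\<eta>\<in>Omega L N. \<bar>F L N \<eta>\<bar> \<le> \<epsilon>)" "\<epsilon> > 0"
  moreover have "\<epsilon> / 2 > 0" using \<open>\<epsilon> > 0\<close> by simp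
  ultimately have "evr \<rho> (\<lambda>L N. \<forall>\<eta>\<in>Omega L N. \<bar>E L N \<eta>\<bar> \<le> \<epsilon> / 2)" "evr \<rho> (\<lambda>L N. \<forall>\<eta>\<in>Omega L N. \<bar>F L N \<eta>\<bar> \<le> \<epsilon> / 2)" by blast+
  from evr_conj[OF this] show "evr \<rho> (\<lambda>L N. \<forall>\<eta>\<in>Omega L N. \<bar>E L N \<eta> + F L N \<eta>\<bar> \<le> \<epsilon>)"
  proof (rule evr_mono, intro ballI)
    fix L N \<eta> assume a: "(\<forall>\<eta>\<in>Omega L N. \<bar>E L N \<eta>\<bar> \<le> \<epsilon> / 2) \<and> (\<forall>\<eta>\<in>Omega L N. \<bar>F L N \<eta>\<bar> \<le> \<epsilon> / 2)" "\<eta> \<in> Omega L N"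
    then have "\<bar>E L N \<eta>\<bar> \<le> \<epsilon> / 2" "\<bar>F L N \<eta>\<bar> \<le> \<epsilon> / 2" by auto
    then show "\<bar>E L N \<eta> + F L N \<eta>\<bar> \<le> \<epsilon>" using abs_triangle_ineq[of "E L N \<eta>" "F L N \<eta>"] by linarith
  qed
qed

lemma small_scale: "small \<rho> E \<Longrightarrow> small \<rho> (\<lambda>L N \<eta>. c * E L N \<eta>)"
  unfolding small_def
proof (intro allI impI)
  fix \<epsilon> :: real assume a: "\<forall>\<epsilon>>0. evr \<rho> (\<lambda>L N. \<forall>\<eta>\<in>Omega L N. \<bar>E L N \<eta>\<bar> \<le> \<epsilon>)" "\<epsilon> > 0"
  then have "evr \<rho> (\<lambda>L N. \<forall>\<eta>\<in>Omega L N. \<bar>E L N \<eta>\<bar> \<le> \<epsilon> / (\<bar>c\<bar> + 1))" by auto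
  then show "evr \<rho> (\<lambda>L N. \<forall>\<eta>\<in>Omega L N. \<bar>c * E L N \<eta>\<bar> \<le> \<epsilon>)"
  proof (rule evr_mono, intro ballI)
    fix L N \<eta> assume "\<forall>\<eta>\<in>Omega L N. \<bar>E L N \<eta>\<bar> \<le> \<epsilon> / (\<bar>c\<bar> + 1)" "\<eta> \<in> Omega L N"
    then have "\<bar>E L N \<eta>\<bar> \<le> \<epsilon> / (\<bar>c\<bar> + 1)" by auto
    then have "(\<bar>c\<bar> + 1) * \<bar>E L N \<eta>\<bar> \<le> \<epsilon>" by (simp add: field_simps)
    moreover have "\<bar>c * E L N \<eta>\<bar> \<le> (\<bar>c\<bar> + 1) * \<bar>E L N \<eta>\<bar>" by (simp add: abs_mult mult_right_mono)
    ultimately show "\<bar>c * E L N \<eta>\<bar> \<le> \<epsilon>" by linarith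
  qed
qed

lemma small_bound: "zq \<rho> q \<Longrightarrow> evr \<rho> (\<lambda>L N. \<forall>\<eta>\<in>Omega L N. \<bar>E L N \<eta>\<bar> \<le> q L N) \<Longrightarrow> small \<rho> E"
  unfolding small_def zq_def
proof (intro allI impI)
  fix \<epsilon> :: real assume "\<forall>\<epsilon>>0. evr \<rho> (\<lambda>L N. \<bar>q L N\<bar> \<le> \<epsilon>)" "evr \<rho> (\<lambda>L N. \<forall>\<eta>\<in>Omega L N. \<bar>E L N \<eta>\<bar> \<le> q L N)" "\<epsilon> > 0"
  then have "evr \<rho> (\<lambda>L N. \<bar>q L N\<bar> \<le> \<epsilon>)" "evr \<rho> (\<lambda>L N. \<forall>\<eta>\<in>Omega L N. \<bar>E L N \<eta>\<bar> \<le> q L N)" by auto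
  from evr_conj[OF this] show "evr \<rho> (\<lambda>L N. \<forall>\<eta>\<in>Omega L N. \<bar>E L N \<eta>\<bar> \<le> \<epsilon>)"
    by (rule evr_mono) force
qed

locale asym =
  fixes \<rho> :: real and d :: "nat \<Rightarrow> real"
  assumes rho: "\<rho> > 0" and d0: "d \<longlonglongrightarrow> 0"
    and dL: "filterlim (\<lambda>L. d L * real L) at_top sequentially"
begin

lemma pos: "evr \<rho> (\<lambda>L N. 0 < L \<and> 0 < N \<and> 0 < d L \<and> \<rho> / 2 * real L < real N \<and> real N < 2 * \<rho> * real L)"
proof -
  have "eventually (\<lambda>L. d L * real L > 0) sequentially"
    using dL by (simp add: filterlim_at_top_dense)
  then have "evr \<rho> (\<lambda>L N. d L * real L > 0)" by (rule evr_seq)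
  from evr_conj[OF this evr_ratio[OF rho]] show ?thesis
  proof (rule evr_mono)
    fix L N assume a: "0 < d L * real L \<and> 0 < L \<and> \<rho> / 2 * real L < real N \<and> real N < 2 * \<rho> * real L"
    then have "0 < d L" by (simp add: zero_less_mult_iff)
    moreover have "0 < real N"
    proof -
      have "\<rho> / 2 * real L > 0" using a rho by simp
      then show ?thesis using a by linarith
    qed
    ultimately show "0 < L \<and> 0 < N \<and> 0 < d L \<and> \<rho> / 2 * real L < real N \<and> real N < 2 * \<rho> * real L" using a by simp
  qed
qed

lemma zq_invL: "zq \<rho> (\<lambda>L N. 1 / real L)"
  unfolding zq_def
proof (intro allI impI)
  fix \<epsilon> :: real assume e: "\<epsilon> > 0"
  have "eventually (\<lambda>L. real L \<ge> 1 / \<epsilon>) sequentially"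
    by (rule eventually_sequentiallyI[of "nat \<lceil>1 / \<epsilon>\<rceil>"]) linarith
  then have "evr \<rho> (\<lambda>L N. real L \<ge> 1 / \<epsilon>)" by (rule evr_seq)
  from evr_conj[OF this pos] show "evr \<rho> (\<lambda>L N. \<bar>1 / real L\<bar> \<le> \<epsilon>)"
    by (rule evr_mono) (use e in \<open>auto simp: field_simps\<close>)
qed

lemma zq_invN: "zq \<rho> (\<lambda>L N. 1 / real N)"
  unfolding zq_def
proof (intro allI impI)
  fix \<epsilon> :: real assume e: "\<epsilon> > 0"
  have "eventually (\<lambda>L. real L \<ge> 2 / (\<rho> * \<epsilon>)) sequentially"
    by (rule eventually_sequentiallyI[of "nat \<lceil>2 / (\<rho> * \<epsilon>)\<rceil>"]) linarith
  then have "evr \<rho> (\<lambda>L N. real L \<ge> 2 / (\<rho> * \<epsilon>))" by (rule evr_seq)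
  from evr_conj[OF this pos] show "evr \<rho> (\<lambda>L N. \<bar>1 / real N\<bar> \<le> \<epsilon>)"
  proof (rule evr_mono)
    fix L N assume a: "2 / (\<rho> * \<epsilon>) \<le> real L \<and> 0 < L \<and> 0 < N \<and> 0 < d L \<and> \<rho> / 2 * real L < real N \<and> real N < 2 * \<rho> * real L"
    then have c1: "2 \<le> \<epsilon> * (\<rho> * real L)" using rho e by (simp add: field_simps)
    have "\<epsilon> * (\<rho> * real L) < \<epsilon> * (2 * real N)" using a e by (intro mult_strict_left_mono) auto
    then have "1 \<le> \<epsilon> * real N" using c1 by linarith
    then show "\<bar>1 / real N\<bar> \<le> \<epsilon>" using a e by (simp add: field_simps)
  qed
qed

lemma zq_invdL: "zq \<rho> (\<lambda>L N. 1 / (d L * real L))"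
  unfolding zq_def
proof (intro allI impI)
  fix \<epsilon> :: real assume e: "\<epsilon> > 0"
  have "eventually (\<lambda>L. d L * real L \<ge> 1 / \<epsilon>) sequentially"
    using dL by (simp add: filterlim_at_top)
  then have "evr \<rho> (\<lambda>L N. d L * real L \<ge> 1 / \<epsilon>)" by (rule evr_seq)
  from evr_conj[OF this pos] show "evr \<rho> (\<lambda>L N. \<bar>1 / (d L * real L)\<bar> \<le> \<epsilon>)"
  proof (rule evr_mono)
    fix L N assume a: "1 / \<epsilon> \<le> d L * real L \<and> 0 < L \<and> 0 < N \<and> 0 < d L \<and> \<rho> / 2 * real L < real N \<and> real N < 2 * \<rho> * real L"
    then have p: "d L * real L > 0" by simp
    show "\<bar>1 / (d L * real L)\<bar> \<le> \<epsilon>" using a p e by (simp add: field_simps)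
  qed
qed

lemma zq_d: "zq \<rho> (\<lambda>L N. d L)"
  unfolding zq_def
proof (intro allI impI)
  fix \<epsilon> :: real assume e: "\<epsilon> > 0"
  have "eventually (\<lambda>L. \<bar>d L\<bar> < \<epsilon>) sequentially"
    using d0 e by (auto simp: tendsto_iff dist_real_def)
  then have "evr \<rho> (\<lambda>L N. \<bar>d L\<bar> < \<epsilon>)" by (rule evr_seq)
  then show "evr \<rho> (\<lambda>L N. \<bar>d L\<bar> \<le> \<epsilon>)" by (rule evr_mono) simp
qed

lemma zq_u: "zq \<rho> (\<lambda>L N. d L * real L / real N)"
proof (rule zq_le[OF zq_scale[OF zq_d, of "2 / \<rho>"]])
  show "evr \<rho> (\<lambda>L N. \<bar>d L * real L / real N\<bar> \<le> 2 / \<rho> * d L)"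
    using pos
  proof (rule evr_mono)
    fix L N assume a: "0 < L \<and> 0 < N \<and> 0 < d L \<and> \<rho> / 2 * real L < real N \<and> real N < 2 * \<rho> * real L"
    then have "real L / real N \<le> 2 / \<rho>" using rho by (simp add: field_simps)
    then have "d L * (real L / real N) \<le> d L * (2 / \<rho>)" using a by (intro mult_left_mono) auto
    then show "\<bar>d L * real L / real N\<bar> \<le> 2 / \<rho> * d L" using a by (simp add: ac_simps)
  qed
qed

end


context c3fb begin

lemma S2: "x \<ge> 0 \<Longrightarrow> x * \<bar>f2 x\<bar> \<le> R * M2"
proof -
  assume x: "x \<ge> 0"
  show ?thesis
  proof (cases "x > R")
    case True then show ?thesis by (simp add: f20 R0 Mnn)
  next
    case False
    from mult_mono[of x R, OF _ M2[OF x]] show ?thesis using R0 False x by simp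
  qed
qed

lemma A_bound: "r \<ge> 0 \<Longrightarrow> \<bar>r * f2 r + (2 - r) * f1 r + (f 0 - f r)\<bar> \<le> R * M2 + 2 * M1 + R * M1 + 2 * M0"
proof -
  assume r: "r \<ge> 0"
  have a: "\<bar>r * f2 r\<bar> \<le> R * M2" using S2[OF r] r by (simp add: abs_mult)
  have b: "\<bar>r * f1 r\<bar> \<le> R * M1" using S1[OF r] r by (simp add: abs_mult)
  have c: "\<bar>f1 r\<bar> \<le> M1" "\<bar>f 0\<bar> \<le> M0" "\<bar>f r\<bar> \<le> M0" using M1[OF r] M0[OF r] M0[of 0] by auto
  have "r * f2 r + (2 - r) * f1 r + (f 0 - f r) = r * f2 r + 2 * f1 r - r * f1 r + f 0 - f r" by (simp add: algebra_simps)
  then show ?thesis using a b c by ((simp only:)?; linarith?)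
qed

lemma gg_diffs:
  fixes n u :: real and k :: nat
  assumes n: "n > 0" and u0: "u > 0"
  defines "gg \<equiv> \<lambda>j::nat. (real j / n) * f (u * real j)"
  shows "k \<ge> 1 \<Longrightarrow> \<bar>gg (k - 1) - gg k\<bar> \<le> (M0 + (R + u) * M1) / n"
    and "\<bar>gg (k + 1) - gg k\<bar> \<le> (M0 + (R + u) * M1) / n"
proof -
  define kk where "kk = real k"
  define z where "z = u * kk"
  have k0: "kk \<ge> 0" by (simp add: kk_def)
  have z0: "z \<ge> 0" "z + u \<ge> 0" using u0 k0 by (auto simp: z_def)
  have W0p: "kk * \<bar>f (z + u) - f z\<bar> \<le> (R + u) * M1"
  proof -
    have "max z (z + u) * \<bar>f (z + u) - f z\<bar> \<le> (R + \<bar>z + u - z\<bar>) * (M1 * \<bar>z + u - z\<bar>)" by (rule W0) (use z0 in auto)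
    then have "(z + u) * \<bar>f (z + u) - f z\<bar> \<le> (R + u) * M1 * u" using u0 by (simp add: max_def)
    moreover have "z * \<bar>f (z + u) - f z\<bar> \<le> (z + u) * \<bar>f (z + u) - f z\<bar>" using u0 by (intro mult_right_mono) auto
    ultimately have "u * (kk * \<bar>f (z + u) - f z\<bar>) \<le> u * ((R + u) * M1)" by (simp add: z_def algebra_simps)
    then show ?thesis using u0 by simp
  qed
  have "gg (k + 1) - gg k = (f (z + u) + kk * (f (z + u) - f z)) / n"
  proof -
    have "u * (kk + 1) = z + u" by (simp add: z_def algebra_simps)
    then show ?thesis unfolding gg_def using n by (simp add: kk_def z_def field_simps)
  qed
  moreover have "\<bar>f (z + u) + kk * (f (z + u) - f z)\<bar> \<le> M0 + (R + u) * M1"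
    using abs_add_k[OF k0, of "f (z + u)" "f (z + u) - f z"] W0p M0[OF z0(2)] by linarith
  ultimately show "\<bar>gg (k + 1) - gg k\<bar> \<le> (M0 + (R + u) * M1) / n"
    using n by (simp add: divide_right_mono)
  assume k1: "k \<ge> 1"
  have z1: "z - u \<ge> 0" using k1 u0 by (simp add: z_def kk_def algebra_simps)
  have W0m: "kk * \<bar>f (z - u) - f z\<bar> \<le> (R + u) * M1"
  proof -
    have "max z (z - u) * \<bar>f (z - u) - f z\<bar> \<le> (R + \<bar>z - u - z\<bar>) * (M1 * \<bar>z - u - z\<bar>)" by (rule W0) (use z0 z1 in auto)
    then have "z * \<bar>f (z - u) - f z\<bar> \<le> (R + u) * M1 * u" using u0 by (simp add: max_def)
    then have "u * (kk * \<bar>f (z - u) - f z\<bar>) \<le> u * ((R + u) * M1)" by (simp add: z_def algebra_simps)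
    then show ?thesis using u0 by simp
  qed
  have "gg (k - 1) - gg k = (kk * (f (z - u) - f z) - f (z - u)) / n"
  proof -
    have "real (k - 1) = kk - 1" using k1 by (simp add: kk_def of_nat_diff)
    moreover have "u * (kk - 1) = z - u" by (simp add: z_def algebra_simps)
    ultimately show ?thesis unfolding gg_def using n by (simp add: kk_def z_def field_simps)
  qed
  moreover have "\<bar>kk * (f (z - u) - f z) - f (z - u)\<bar> \<le> M0 + (R + u) * M1"
    using abs_sub_k[OF k0, of "f (z - u) - f z" "f (z - u)"] W0m M0[OF z1] by linarith
  ultimately show "\<bar>gg (k - 1) - gg k\<bar> \<le> (M0 + (R + u) * M1) / n"
    using n by (simp add: divide_right_mono)
qed

end

lemma emp_bound:
  assumes om: "\<xi> \<in> Omega L N" and N: "N > 0" and B: "B \<ge> 0"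
    and b: "\<And>x. x < L \<Longrightarrow> 0 < \<xi> x \<Longrightarrow> \<bar>g (ennreal (d * real L * real (\<xi> x) / real N))\<bar> \<le> B"
  shows "\<bar>emp L N d \<xi> g\<bar> \<le> B"
proof -
  have "\<bar>emp L N d \<xi> g\<bar> \<le> (\<Sum>x<L. \<bar>(real (\<xi> x) / real N) * g (ennreal (d * real L * real (\<xi> x) / real N))\<bar>)"
    unfolding emp_def by (rule sum_abs)
  also have "\<dots> \<le> (\<Sum>x<L. (real (\<xi> x) / real N) * B)"
  proof (rule sum_mono)
    fix x assume x: "x \<in> {..<L}"
    show "\<bar>(real (\<xi> x) / real N) * g (ennreal (d * real L * real (\<xi> x) / real N))\<bar> \<le> (real (\<xi> x) / real N) * B"
    proof (cases "\<xi> x = 0")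
      case False
      have "real (\<xi> x) * \<bar>g (ennreal (d * real L * real (\<xi> x) / real N))\<bar> \<le> real (\<xi> x) * B"
        using b[of x] x False by (intro mult_left_mono) auto
      then show ?thesis by (simp add: abs_mult divide_right_mono)
    qed simp
  qed
  also have "\<dots> = B * ((\<Sum>x<L. real (\<xi> x)) / real N)"
    by (simp add: sum_distrib_left[symmetric] sum_divide_distrib[symmetric] ac_simps)
  also have "\<dots> = B" using Omega_sum[OF om] N by simp
  finally show ?thesis .
qed

lemma emp_const: "\<xi> \<in> Omega L N \<Longrightarrow> N > 0 \<Longrightarrow> emp L N d \<xi> (\<lambda>_. c) = c"
  unfolding emp_def using Omega_sum[of \<xi> L N]
  by (simp add: sum_distrib_right[symmetric] sum_divide_distrib[symmetric])

lemma D1_const: "r > 0 \<Longrightarrow> D1 (\<lambda>_. c) r = 0"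
  by (rule D1_eq) auto

lemma D1D1_const: "r > 0 \<Longrightarrow> D1 (D1 (\<lambda>_. c)) r = 0"
proof -
  assume r: "r > 0"
  have a: "((\<lambda>_. 0) has_real_derivative 0) (at r)" by simp
  have "(D1 (\<lambda>_. c) has_real_derivative 0) (at r)"
    by (rule has_field_derivative_transform_within_open[OF a, of "{0<..}"]) (use r D1_const in auto)
  then show ?thesis using r by (intro D1_eq) (simp_all add: at_within_pos)
qed

lemma Ahat_const: "r > 0 \<Longrightarrow> Ahat (\<lambda>_. c) (ennreal r) = 0"
  unfolding Ahat_def hr_def using D1_const[of r c] D1D1_const[of r c]
  by (simp add: Let_def)

lemma emp_Ahat_const: "\<eta> \<in> Omega L N \<Longrightarrow> N > 0 \<Longrightarrow> d > 0 \<Longrightarrow> L > 0 \<Longrightarrow> emp L N d \<eta> (Ahat (\<lambda>_. c)) = 0"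
  unfolding emp_def
proof (intro sum.neutral ballI)
  fix x assume "N > 0" "d > 0" "L > 0"
  show "real (\<eta> x) / real N * Ahat (\<lambda>_. c) (ennreal (d * real L * real (\<eta> x) / real N)) = 0"
  proof (cases "\<eta> x = 0")
    case False
    then have "d * real L * real (\<eta> x) / real N > 0" using \<open>N > 0\<close> \<open>d > 0\<close> \<open>L > 0\<close> by simp
    then show ?thesis using Ahat_const by simp
  qed simp
qed

lemma gen_emp_const:
  assumes "\<eta> \<in> Omega L N" "N > 0"
  shows "gen L d (\<lambda>\<xi>. emp L N d' \<xi> (\<lambda>_. c)) \<eta> = 0"
  unfolding gen_def
proof (intro sum.neutral ballI)
  fix x y assume x: "x \<in> {..<L}" and y: "y \<in> {..<L} - {x}"
  show "real (\<eta> x) * (d + real (\<eta> y)) * (emp L N d' (jump \<eta> x y) (\<lambda>_. c) - emp L N d' \<eta> (\<lambda>_. c)) = 0"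
  proof (cases "\<eta> x = 0")
    case False
    then have "jump \<eta> x y \<in> Omega L N" using x y assms by (intro jump_Omega) auto
    then show ?thesis using assms emp_const by simp
  qed simp
qed


definition good :: "real \<Rightarrow> (nat \<Rightarrow> real) \<Rightarrow> (nat \<Rightarrow> nat \<Rightarrow> (nat \<Rightarrow> nat) \<Rightarrow> real) \<Rightarrow> (nat \<Rightarrow> nat \<Rightarrow> (nat \<Rightarrow> nat) \<Rightarrow> real) \<Rightarrow> bool" where
  "good \<rho> d \<Phi> \<Psi> \<longleftrightarrow>
    (\<exists>B\<ge>0. evr \<rho> (\<lambda>L N. \<forall>\<xi>\<in>Omega L N. \<bar>\<Phi> L N \<xi>\<bar> \<le> B)) \<and>
    (\<exists>C\<ge>0. evr \<rho> (\<lambda>L N. \<forall>\<eta>\<in>Omega L N. \<forall>x<L. \<forall>y<L. x \<noteq> y \<longrightarrow> 0 < \<eta> x \<longrightarrow> \<bar>\<Phi> L N (jump \<eta> x y) - \<Phi> L N \<eta>\<bar> \<le> C / real N)) \<and>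
    (\<exists>B\<ge>0. evr \<rho> (\<lambda>L N. \<forall>\<eta>\<in>Omega L N. \<bar>\<Psi> L N \<eta>\<bar> \<le> B)) \<and>
    small \<rho> (\<lambda>L N \<eta>. gen L (d L) (\<Phi> L N) \<eta> / (d L * real L) - \<Psi> L N \<eta>)"

lemma abs_mult_le: "\<bar>a::real\<bar> \<le> A \<Longrightarrow> \<bar>b\<bar> \<le> B \<Longrightarrow> \<bar>a * b\<bar> \<le> A * B"
  unfolding abs_mult by (rule mult_mono) auto

lemma cross_alg: "(n::real) > 0 \<Longrightarrow> D > 0 \<Longrightarrow> (c1 / n * (c2 / n)) * (n * (D + n)) / D = c1 * c2 * (1 / n + 1 / D)"
  by (simp add: field_simps power2_eq_square)

lemma cross_bound:
  fixes f g :: "(nat \<Rightarrow> nat) \<Rightarrow> real"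
  assumes om: "\<eta> \<in> Omega L N" and d: "d > 0" and L: "L > 0" and N: "N > 0" and C: "C1 \<ge> 0" "C2 \<ge> 0"
    and b1: "\<forall>x<L. \<forall>y<L. x \<noteq> y \<longrightarrow> 0 < \<eta> x \<longrightarrow> \<bar>f (jump \<eta> x y) - f \<eta>\<bar> \<le> C1 / real N"
    and b2: "\<forall>x<L. \<forall>y<L. x \<noteq> y \<longrightarrow> 0 < \<eta> x \<longrightarrow> \<bar>g (jump \<eta> x y) - g \<eta>\<bar> \<le> C2 / real N"
  shows "\<bar>(\<Sum>x<L. \<Sum>y\<in>{..<L} - {x}. real (\<eta> x) * (d + real (\<eta> y)) * ((f (jump \<eta> x y) - f \<eta>) * (g (jump \<eta> x y) - g \<eta>)))\<bar> / (d * real L)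
     \<le> C1 * C2 * (1 / real N + 1 / (d * real L))"
proof -
  define K where "K = C1 / real N * (C2 / real N)"
  have K0: "K \<ge> 0" using C by (simp add: K_def)
  have t: "\<bar>real (\<eta> x) * (d + real (\<eta> y)) * ((f (jump \<eta> x y) - f \<eta>) * (g (jump \<eta> x y) - g \<eta>))\<bar>
      \<le> real (\<eta> x) * (d + real (\<eta> y)) * K" if "x \<in> {..<L}" "y \<in> {..<L} - {x}" for x y
  proof (cases "\<eta> x = 0")
    case False
    have r: "real (\<eta> x) * (d + real (\<eta> y)) \<ge> 0" using d by simp
    have "\<bar>(f (jump \<eta> x y) - f \<eta>) * (g (jump \<eta> x y) - g \<eta>)\<bar> \<le> K"
      unfolding K_def by (rule abs_mult_le) (use b1 b2 that False in auto)
    then show ?thesis by (rule abs_scale[OF r])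
  qed simp
  have "\<bar>(\<Sum>x<L. \<Sum>y\<in>{..<L} - {x}. real (\<eta> x) * (d + real (\<eta> y)) * ((f (jump \<eta> x y) - f \<eta>) * (g (jump \<eta> x y) - g \<eta>)))\<bar>
     \<le> (\<Sum>x<L. \<Sum>y\<in>{..<L} - {x}. \<bar>real (\<eta> x) * (d + real (\<eta> y)) * ((f (jump \<eta> x y) - f \<eta>) * (g (jump \<eta> x y) - g \<eta>))\<bar>)"
    by (rule order_trans[OF sum_abs]) (intro sum_mono sum_abs)
  also have "\<dots> \<le> (\<Sum>x<L. \<Sum>y\<in>{..<L} - {x}. real (\<eta> x) * (d + real (\<eta> y)) * K)"
    by (intro sum_mono t) auto
  also have "\<dots> = K * (\<Sum>x<L. \<Sum>y\<in>{..<L} - {x}. real (\<eta> x) * (d + real (\<eta> y)))"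
    by (simp add: sum_distrib_left ac_simps)
  also have "\<dots> \<le> K * (real N * (d * real L + real N))"
    using rate_sum[OF om] d K0 by (intro mult_left_mono) auto
  finally have A: "\<bar>(\<Sum>x<L. \<Sum>y\<in>{..<L} - {x}. real (\<eta> x) * (d + real (\<eta> y)) * ((f (jump \<eta> x y) - f \<eta>) * (g (jump \<eta> x y) - g \<eta>)))\<bar>
     \<le> K * (real N * (d * real L + real N))" .
  have "K * (real N * (d * real L + real N)) / (d * real L) = C1 * C2 * (1 / real N + 1 / (d * real L))"
    unfolding K_def using d L N by (intro cross_alg) auto
  moreover have "\<bar>(\<Sum>x<L. \<Sum>y\<in>{..<L} - {x}. real (\<eta> x) * (d + real (\<eta> y)) * ((f (jump \<eta> x y) - f \<eta>) * (g (jump \<eta> x y) - g \<eta>)))\<bar> / (d * real L)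
     \<le> K * (real N * (d * real L + real N)) / (d * real L)"
    using A d L by (intro divide_right_mono) auto
  ultimately show ?thesis by simp
qed

lemma small_dom:
  assumes "small \<rho> E1" "small \<rho> E2" "zq \<rho> q" "a \<ge> 0" "b \<ge> 0"
    and "evr \<rho> (\<lambda>L N. \<forall>\<eta>\<in>Omega L N. \<bar>E L N \<eta>\<bar> \<le> a * \<bar>E1 L N \<eta>\<bar> + b * \<bar>E2 L N \<eta>\<bar> + q L N)"
  shows "small \<rho> E"
  unfolding small_def
proof (intro allI impI)
  fix \<epsilon> :: real assume e: "\<epsilon> > 0"
  have e3: "\<epsilon> / 3 > 0" using e by simp
  have "evr \<rho> (\<lambda>L N. \<forall>\<eta>\<in>Omega L N. \<bar>a * E1 L N \<eta>\<bar> \<le> \<epsilon> / 3)"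
    using small_scale[OF assms(1), of a] e3 unfolding small_def by blast
  moreover have "evr \<rho> (\<lambda>L N. \<forall>\<eta>\<in>Omega L N. \<bar>b * E2 L N \<eta>\<bar> \<le> \<epsilon> / 3)"
    using small_scale[OF assms(2), of b] e3 unfolding small_def by blast
  moreover have "evr \<rho> (\<lambda>L N. \<bar>q L N\<bar> \<le> \<epsilon> / 3)" using assms(3) e3 unfolding zq_def by blast
  ultimately have "evr \<rho> (\<lambda>L N. (\<forall>\<eta>\<in>Omega L N. \<bar>a * E1 L N \<eta>\<bar> \<le> \<epsilon> / 3) \<and> (\<forall>\<eta>\<in>Omega L N. \<bar>b * E2 L N \<eta>\<bar> \<le> \<epsilon> / 3)
      \<and> \<bar>q L N\<bar> \<le> \<epsilon> / 3 \<and> (\<forall>\<eta>\<in>Omega L N. \<bar>E L N \<eta>\<bar> \<le> a * \<bar>E1 L N \<eta>\<bar> + b * \<bar>E2 L N \<eta>\<bar> + q L N))"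
    using assms(6) by (intro evr_conj) auto
  then show "evr \<rho> (\<lambda>L N. \<forall>\<eta>\<in>Omega L N. \<bar>E L N \<eta>\<bar> \<le> \<epsilon>)"
  proof (rule evr_mono, intro ballI)
    fix L N \<eta> assume h: "(\<forall>\<eta>\<in>Omega L N. \<bar>a * E1 L N \<eta>\<bar> \<le> \<epsilon> / 3) \<and> (\<forall>\<eta>\<in>Omega L N. \<bar>b * E2 L N \<eta>\<bar> \<le> \<epsilon> / 3)
      \<and> \<bar>q L N\<bar> \<le> \<epsilon> / 3 \<and> (\<forall>\<eta>\<in>Omega L N. \<bar>E L N \<eta>\<bar> \<le> a * \<bar>E1 L N \<eta>\<bar> + b * \<bar>E2 L N \<eta>\<bar> + q L N)"
      and om: "\<eta> \<in> Omega L N"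
    then have "\<bar>a * E1 L N \<eta>\<bar> \<le> \<epsilon> / 3" "\<bar>b * E2 L N \<eta>\<bar> \<le> \<epsilon> / 3" "\<bar>q L N\<bar> \<le> \<epsilon> / 3"
      "\<bar>E L N \<eta>\<bar> \<le> a * \<bar>E1 L N \<eta>\<bar> + b * \<bar>E2 L N \<eta>\<bar> + q L N" by auto
    moreover have "\<bar>a * E1 L N \<eta>\<bar> = a * \<bar>E1 L N \<eta>\<bar>" "\<bar>b * E2 L N \<eta>\<bar> = b * \<bar>E2 L N \<eta>\<bar>"
      using assms(4,5) by (simp_all add: abs_mult)
    ultimately show "\<bar>E L N \<eta>\<bar> \<le> \<epsilon>" by linarith
  qed
qed

context asym begin

lemma good_mult:
  assumes g1: "good \<rho> d \<Phi>1 \<Psi>1" and g2: "good \<rho> d \<Phi>2 \<Psi>2"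
  shows "good \<rho> d (\<lambda>L N \<xi>. \<Phi>1 L N \<xi> * \<Phi>2 L N \<xi>) (\<lambda>L N \<eta>. \<Psi>1 L N \<eta> * \<Phi>2 L N \<eta> + \<Phi>1 L N \<eta> * \<Psi>2 L N \<eta>)"
proof -
  obtain B1 C1 D1 where B1: "B1 \<ge> 0" "evr \<rho> (\<lambda>L N. \<forall>\<xi>\<in>Omega L N. \<bar>\<Phi>1 L N \<xi>\<bar> \<le> B1)"
    and C1: "C1 \<ge> 0" "evr \<rho> (\<lambda>L N. \<forall>\<eta>\<in>Omega L N. \<forall>x<L. \<forall>y<L. x \<noteq> y \<longrightarrow> 0 < \<eta> x \<longrightarrow> \<bar>\<Phi>1 L N (jump \<eta> x y) - \<Phi>1 L N \<eta>\<bar> \<le> C1 / real N)"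
    and D1: "D1 \<ge> 0" "evr \<rho> (\<lambda>L N. \<forall>\<eta>\<in>Omega L N. \<bar>\<Psi>1 L N \<eta>\<bar> \<le> D1)"
    and S1: "small \<rho> (\<lambda>L N \<eta>. gen L (d L) (\<Phi>1 L N) \<eta> / (d L * real L) - \<Psi>1 L N \<eta>)"
    using g1 unfolding good_def by blast
  obtain B2 C2 D2 where B2: "B2 \<ge> 0" "evr \<rho> (\<lambda>L N. \<forall>\<xi>\<in>Omega L N. \<bar>\<Phi>2 L N \<xi>\<bar> \<le> B2)"
    and C2: "C2 \<ge> 0" "evr \<rho> (\<lambda>L N. \<forall>\<eta>\<in>Omega L N. \<forall>x<L. \<forall>y<L. x \<noteq> y \<longrightarrow> 0 < \<eta> x \<longrightarrow> \<bar>\<Phi>2 L N (jump \<eta> x y) - \<Phi>2 L N \<eta>\<bar> \<le> C2 / real N)"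
    and D2: "D2 \<ge> 0" "evr \<rho> (\<lambda>L N. \<forall>\<eta>\<in>Omega L N. \<bar>\<Psi>2 L N \<eta>\<bar> \<le> D2)"
    and S2: "small \<rho> (\<lambda>L N \<eta>. gen L (d L) (\<Phi>2 L N) \<eta> / (d L * real L) - \<Psi>2 L N \<eta>)"
    using g2 unfolding good_def by blast
  have ALL: "evr \<rho> (\<lambda>L N. (0 < L \<and> 0 < N \<and> 0 < d L \<and> \<rho> / 2 * real L < real N \<and> real N < 2 * \<rho> * real L)
     \<and> (\<forall>\<xi>\<in>Omega L N. \<bar>\<Phi>1 L N \<xi>\<bar> \<le> B1) \<and> (\<forall>\<xi>\<in>Omega L N. \<bar>\<Phi>2 L N \<xi>\<bar> \<le> B2)
     \<and> (\<forall>\<eta>\<in>Omega L N. \<forall>x<L. \<forall>y<L. x \<noteq> y \<longrightarrow> 0 < \<eta> x \<longrightarrow> \<bar>\<Phi>1 L N (jump \<eta> x y) - \<Phi>1 L N \<eta>\<bar> \<le> C1 / real N)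
     \<and> (\<forall>\<eta>\<in>Omega L N. \<forall>x<L. \<forall>y<L. x \<noteq> y \<longrightarrow> 0 < \<eta> x \<longrightarrow> \<bar>\<Phi>2 L N (jump \<eta> x y) - \<Phi>2 L N \<eta>\<bar> \<le> C2 / real N)
     \<and> (\<forall>\<eta>\<in>Omega L N. \<bar>\<Psi>1 L N \<eta>\<bar> \<le> D1) \<and> (\<forall>\<eta>\<in>Omega L N. \<bar>\<Psi>2 L N \<eta>\<bar> \<le> D2))"
    by (intro evr_conj pos B1(2) B2(2) C1(2) C2(2) D1(2) D2(2))
  have a: "\<exists>B\<ge>0. evr \<rho> (\<lambda>L N. \<forall>\<xi>\<in>Omega L N. \<bar>\<Phi>1 L N \<xi> * \<Phi>2 L N \<xi>\<bar> \<le> B)"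
  proof (intro exI[of _ "B1 * B2"] conjI)
    show "B1 * B2 \<ge> 0" using B1 B2 by simp
    show "evr \<rho> (\<lambda>L N. \<forall>\<xi>\<in>Omega L N. \<bar>\<Phi>1 L N \<xi> * \<Phi>2 L N \<xi>\<bar> \<le> B1 * B2)"
      using evr_conj[OF B1(2) B2(2)] by (rule evr_mono) (auto intro: abs_mult_le)
  qed
  have c: "\<exists>B\<ge>0. evr \<rho> (\<lambda>L N. \<forall>\<eta>\<in>Omega L N. \<bar>\<Psi>1 L N \<eta> * \<Phi>2 L N \<eta> + \<Phi>1 L N \<eta> * \<Psi>2 L N \<eta>\<bar> \<le> B)"
  proof (intro exI[of _ "D1 * B2 + B1 * D2"] conjI)
    show "D1 * B2 + B1 * D2 \<ge> 0" using B1 B2 D1 D2 by simp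
    show "evr \<rho> (\<lambda>L N. \<forall>\<eta>\<in>Omega L N. \<bar>\<Psi>1 L N \<eta> * \<Phi>2 L N \<eta> + \<Phi>1 L N \<eta> * \<Psi>2 L N \<eta>\<bar> \<le> D1 * B2 + B1 * D2)"
      using ALL
    proof (rule evr_mono, intro ballI)
      fix L N \<eta> assume h: "(0 < L \<and> 0 < N \<and> 0 < d L \<and> \<rho> / 2 * real L < real N \<and> real N < 2 * \<rho> * real L)
     \<and> (\<forall>\<xi>\<in>Omega L N. \<bar>\<Phi>1 L N \<xi>\<bar> \<le> B1) \<and> (\<forall>\<xi>\<in>Omega L N. \<bar>\<Phi>2 L N \<xi>\<bar> \<le> B2)
     \<and> (\<forall>\<eta>\<in>Omega L N. \<forall>x<L. \<forall>y<L. x \<noteq> y \<longrightarrow> 0 < \<eta> x \<longrightarrow> \<bar>\<Phi>1 L N (jump \<eta> x y) - \<Phi>1 L N \<eta>\<bar> \<le> C1 / real N)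
     \<and> (\<forall>\<eta>\<in>Omega L N. \<forall>x<L. \<forall>y<L. x \<noteq> y \<longrightarrow> 0 < \<eta> x \<longrightarrow> \<bar>\<Phi>2 L N (jump \<eta> x y) - \<Phi>2 L N \<eta>\<bar> \<le> C2 / real N)
     \<and> (\<forall>\<eta>\<in>Omega L N. \<bar>\<Psi>1 L N \<eta>\<bar> \<le> D1) \<and> (\<forall>\<eta>\<in>Omega L N. \<bar>\<Psi>2 L N \<eta>\<bar> \<le> D2)"
        and om: "\<eta> \<in> Omega L N"
      then have x: "\<bar>\<Phi>1 L N \<eta>\<bar> \<le> B1" "\<bar>\<Phi>2 L N \<eta>\<bar> \<le> B2" "\<bar>\<Psi>1 L N \<eta>\<bar> \<le> D1" "\<bar>\<Psi>2 L N \<eta>\<bar> \<le> D2" by auto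
      have "\<bar>\<Psi>1 L N \<eta> * \<Phi>2 L N \<eta>\<bar> \<le> D1 * B2" "\<bar>\<Phi>1 L N \<eta> * \<Psi>2 L N \<eta>\<bar> \<le> B1 * D2"
        using x by (auto intro: abs_mult_le)
      then show "\<bar>\<Psi>1 L N \<eta> * \<Phi>2 L N \<eta> + \<Phi>1 L N \<eta> * \<Psi>2 L N \<eta>\<bar> \<le> D1 * B2 + B1 * D2"
        by linarith
    qed
  qed
  have b: "\<exists>C\<ge>0. evr \<rho> (\<lambda>L N. \<forall>\<eta>\<in>Omega L N. \<forall>x<L. \<forall>y<L. x \<noteq> y \<longrightarrow> 0 < \<eta> x \<longrightarrow>
      \<bar>\<Phi>1 L N (jump \<eta> x y) * \<Phi>2 L N (jump \<eta> x y) - \<Phi>1 L N \<eta> * \<Phi>2 L N \<eta>\<bar> \<le> C / real N)"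
  proof (intro exI[of _ "C1 * B2 + B1 * C2"] conjI)
    show "C1 * B2 + B1 * C2 \<ge> 0" using B1 B2 C1 C2 by simp
    show "evr \<rho> (\<lambda>L N. \<forall>\<eta>\<in>Omega L N. \<forall>x<L. \<forall>y<L. x \<noteq> y \<longrightarrow> 0 < \<eta> x \<longrightarrow>
      \<bar>\<Phi>1 L N (jump \<eta> x y) * \<Phi>2 L N (jump \<eta> x y) - \<Phi>1 L N \<eta> * \<Phi>2 L N \<eta>\<bar> \<le> (C1 * B2 + B1 * C2) / real N)"
      using ALL
    proof (rule evr_mono, intro ballI allI impI)
      fix L N \<eta> x y assume h: "(0 < L \<and> 0 < N \<and> 0 < d L \<and> \<rho> / 2 * real L < real N \<and> real N < 2 * \<rho> * real L)
     \<and> (\<forall>\<xi>\<in>Omega L N. \<bar>\<Phi>1 L N \<xi>\<bar> \<le> B1) \<and> (\<forall>\<xi>\<in>Omega L N. \<bar>\<Phi>2 L N \<xi>\<bar> \<le> B2)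
     \<and> (\<forall>\<eta>\<in>Omega L N. \<forall>x<L. \<forall>y<L. x \<noteq> y \<longrightarrow> 0 < \<eta> x \<longrightarrow> \<bar>\<Phi>1 L N (jump \<eta> x y) - \<Phi>1 L N \<eta>\<bar> \<le> C1 / real N)
     \<and> (\<forall>\<eta>\<in>Omega L N. \<forall>x<L. \<forall>y<L. x \<noteq> y \<longrightarrow> 0 < \<eta> x \<longrightarrow> \<bar>\<Phi>2 L N (jump \<eta> x y) - \<Phi>2 L N \<eta>\<bar> \<le> C2 / real N)
     \<and> (\<forall>\<eta>\<in>Omega L N. \<bar>\<Psi>1 L N \<eta>\<bar> \<le> D1) \<and> (\<forall>\<eta>\<in>Omega L N. \<bar>\<Psi>2 L N \<eta>\<bar> \<le> D2)"
        and om: "\<eta> \<in> Omega L N" and xy: "x < L" "y < L" "x \<noteq> y" "0 < \<eta> x"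
      have jom: "jump \<eta> x y \<in> Omega L N" using jump_Omega[OF om xy] .
      define a1 where "a1 = \<Phi>1 L N (jump \<eta> x y)"
      define a2 where "a2 = \<Phi>2 L N (jump \<eta> x y)"
      define b1 where "b1 = \<Phi>1 L N \<eta>"
      define b2 where "b2 = \<Phi>2 L N \<eta>"
      have x: "\<bar>b1\<bar> \<le> B1" "\<bar>a2\<bar> \<le> B2" "\<bar>a1 - b1\<bar> \<le> C1 / real N" "\<bar>a2 - b2\<bar> \<le> C2 / real N"
        using h om jom xy unfolding a1_def a2_def b1_def b2_def by auto
      have "a1 * a2 - b1 * b2 = (a1 - b1) * a2 + b1 * (a2 - b2)" by (simp add: algebra_simps)
      moreover have "\<bar>(a1 - b1) * a2\<bar> \<le> C1 / real N * B2" by (rule abs_mult_le) (use x in auto)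
      moreover have "\<bar>b1 * (a2 - b2)\<bar> \<le> B1 * (C2 / real N)" by (rule abs_mult_le) (use x in auto)
      ultimately have "\<bar>a1 * a2 - b1 * b2\<bar> \<le> C1 / real N * B2 + B1 * (C2 / real N)"
        by linarith
      then show "\<bar>\<Phi>1 L N (jump \<eta> x y) * \<Phi>2 L N (jump \<eta> x y) - \<Phi>1 L N \<eta> * \<Phi>2 L N \<eta>\<bar> \<le> (C1 * B2 + B1 * C2) / real N"
        unfolding a1_def a2_def b1_def b2_def by (simp add: add_divide_distrib)
    qed
  qed
  have zq2: "zq \<rho> (\<lambda>L N. C1 * C2 * (1 / real N + 1 / (d L * real L)))"
    by (intro zq_scale zq_add zq_invN zq_invdL)
  have s: "small \<rho> (\<lambda>L N \<eta>. gen L (d L) (\<lambda>\<xi>. \<Phi>1 L N \<xi> * \<Phi>2 L N \<xi>) \<eta> / (d L * real L) - (\<Psi>1 L N \<eta> * \<Phi>2 L N \<eta> + \<Phi>1 L N \<eta> * \<Psi>2 L N \<eta>))"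
  proof (rule small_dom[OF S2 S1 zq2, of B1 B2])
    show "B1 \<ge> 0" "B2 \<ge> 0" using B1 B2 by auto
    show "evr \<rho> (\<lambda>L N. \<forall>\<eta>\<in>Omega L N.
        \<bar>gen L (d L) (\<lambda>\<xi>. \<Phi>1 L N \<xi> * \<Phi>2 L N \<xi>) \<eta> / (d L * real L) - (\<Psi>1 L N \<eta> * \<Phi>2 L N \<eta> + \<Phi>1 L N \<eta> * \<Psi>2 L N \<eta>)\<bar>
        \<le> B1 * \<bar>gen L (d L) (\<Phi>2 L N) \<eta> / (d L * real L) - \<Psi>2 L N \<eta>\<bar>
         + B2 * \<bar>gen L (d L) (\<Phi>1 L N) \<eta> / (d L * real L) - \<Psi>1 L N \<eta>\<bar>
         + C1 * C2 * (1 / real N + 1 / (d L * real L)))"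
      using ALL
    proof (rule evr_mono, intro ballI)
      fix L N \<eta> assume h: "(0 < L \<and> 0 < N \<and> 0 < d L \<and> \<rho> / 2 * real L < real N \<and> real N < 2 * \<rho> * real L)
     \<and> (\<forall>\<xi>\<in>Omega L N. \<bar>\<Phi>1 L N \<xi>\<bar> \<le> B1) \<and> (\<forall>\<xi>\<in>Omega L N. \<bar>\<Phi>2 L N \<xi>\<bar> \<le> B2)
     \<and> (\<forall>\<eta>\<in>Omega L N. \<forall>x<L. \<forall>y<L. x \<noteq> y \<longrightarrow> 0 < \<eta> x \<longrightarrow> \<bar>\<Phi>1 L N (jump \<eta> x y) - \<Phi>1 L N \<eta>\<bar> \<le> C1 / real N)
     \<and> (\<forall>\<eta>\<in>Omega L N. \<forall>x<L. \<forall>y<L. x \<noteq> y \<longrightarrow> 0 < \<eta> x \<longrightarrow> \<bar>\<Phi>2 L N (jump \<eta> x y) - \<Phi>2 L N \<eta>\<bar> \<le> C2 / real N)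
     \<and> (\<forall>\<eta>\<in>Omega L N. \<bar>\<Psi>1 L N \<eta>\<bar> \<le> D1) \<and> (\<forall>\<eta>\<in>Omega L N. \<bar>\<Psi>2 L N \<eta>\<bar> \<le> D2)"
        and om: "\<eta> \<in> Omega L N"
      define DL where "DL = d L * real L"
      have DL: "DL > 0" using h by (simp add: DL_def)
      define cr where "cr = (\<Sum>x<L. \<Sum>y\<in>{..<L} - {x}. real (\<eta> x) * (d L + real (\<eta> y)) *
          ((\<Phi>1 L N (jump \<eta> x y) - \<Phi>1 L N \<eta>) * (\<Phi>2 L N (jump \<eta> x y) - \<Phi>2 L N \<eta>)))"
      define g1 where "g1 = gen L (d L) (\<Phi>1 L N) \<eta>"
      define g2 where "g2 = gen L (d L) (\<Phi>2 L N) \<eta>"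
      have gm: "gen L (d L) (\<lambda>\<xi>. \<Phi>1 L N \<xi> * \<Phi>2 L N \<xi>) \<eta> = \<Phi>1 L N \<eta> * g2 + \<Phi>2 L N \<eta> * g1 + cr"
        unfolding g1_def g2_def cr_def by (rule gen_mult)
      have crb: "\<bar>cr\<bar> / DL \<le> C1 * C2 * (1 / real N + 1 / DL)"
        unfolding cr_def DL_def using h om C1(1) C2(1) by (intro cross_bound) auto
      have idt: "(\<Phi>1 L N \<eta> * g2 + \<Phi>2 L N \<eta> * g1 + cr) / DL - (\<Psi>1 L N \<eta> * \<Phi>2 L N \<eta> + \<Phi>1 L N \<eta> * \<Psi>2 L N \<eta>)
          = \<Phi>1 L N \<eta> * (g2 / DL - \<Psi>2 L N \<eta>) + \<Phi>2 L N \<eta> * (g1 / DL - \<Psi>1 L N \<eta>) + cr / DL"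
        using DL by (simp add: field_simps)
      have x: "\<bar>\<Phi>1 L N \<eta>\<bar> \<le> B1" "\<bar>\<Phi>2 L N \<eta>\<bar> \<le> B2" using h om by auto
      have y1: "\<bar>\<Phi>1 L N \<eta> * (g2 / DL - \<Psi>2 L N \<eta>)\<bar> \<le> B1 * \<bar>g2 / DL - \<Psi>2 L N \<eta>\<bar>"
        using x by (intro abs_mult_le) auto
      have y2: "\<bar>\<Phi>2 L N \<eta> * (g1 / DL - \<Psi>1 L N \<eta>)\<bar> \<le> B2 * \<bar>g1 / DL - \<Psi>1 L N \<eta>\<bar>"
        using x by (intro abs_mult_le) auto
      have y3: "\<bar>cr / DL\<bar> \<le> C1 * C2 * (1 / real N + 1 / DL)" using crb DL by simp
      have E: "gen L (d L) (\<lambda>\<xi>. \<Phi>1 L N \<xi> * \<Phi>2 L N \<xi>) \<eta> / DL - (\<Psi>1 L N \<eta> * \<Phi>2 L N \<eta> + \<Phi>1 L N \<eta> * \<Psi>2 L N \<eta>)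
          = \<Phi>1 L N \<eta> * (g2 / DL - \<Psi>2 L N \<eta>) + \<Phi>2 L N \<eta> * (g1 / DL - \<Psi>1 L N \<eta>) + cr / DL"
        unfolding gm by (rule idt)
      have "\<bar>\<Phi>1 L N \<eta> * (g2 / DL - \<Psi>2 L N \<eta>) + \<Phi>2 L N \<eta> * (g1 / DL - \<Psi>1 L N \<eta>) + cr / DL\<bar>
          \<le> B1 * \<bar>g2 / DL - \<Psi>2 L N \<eta>\<bar> + B2 * \<bar>g1 / DL - \<Psi>1 L N \<eta>\<bar> + C1 * C2 * (1 / real N + 1 / DL)"
        using y1 y2 y3 by linarith
      then have fin: "\<bar>gen L (d L) (\<lambda>\<xi>. \<Phi>1 L N \<xi> * \<Phi>2 L N \<xi>) \<eta> / DL - (\<Psi>1 L N \<eta> * \<Phi>2 L N \<eta> + \<Phi>1 L N \<eta> * \<Psi>2 L N \<eta>)\<bar>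
          \<le> B1 * \<bar>g2 / DL - \<Psi>2 L N \<eta>\<bar> + B2 * \<bar>g1 / DL - \<Psi>1 L N \<eta>\<bar> + C1 * C2 * (1 / real N + 1 / DL)"
        unfolding E .
      show "\<bar>gen L (d L) (\<lambda>\<xi>. \<Phi>1 L N \<xi> * \<Phi>2 L N \<xi>) \<eta> / (d L * real L) - (\<Psi>1 L N \<eta> * \<Phi>2 L N \<eta> + \<Phi>1 L N \<eta> * \<Psi>2 L N \<eta>)\<bar>
        \<le> B1 * \<bar>gen L (d L) (\<Phi>2 L N) \<eta> / (d L * real L) - \<Psi>2 L N \<eta>\<bar>
         + B2 * \<bar>gen L (d L) (\<Phi>1 L N) \<eta> / (d L * real L) - \<Psi>1 L N \<eta>\<bar>
         + C1 * C2 * (1 / real N + 1 / (d L * real L))"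
        using fin unfolding g1_def g2_def DL_def .
    qed
  qed
  show ?thesis unfolding good_def by (intro conjI a b c s)
qed

end


context c3fb begin

lemma Kc_le:
  assumes u: "0 < u" "u \<le> 1" and d: "0 < d" and l: "0 < l"
  shows "Kc l d u + M1 * u \<le> (2 * (R + 1) * M3 + (R + 1) * M2 + 2 * M1) * u + (R * R * M2 + 2 * R * M1) * (1 / (d * l))
     + (2 * (M0 + (R + 1) * M1)) * (1 / l) + (2 * M1) * d"
proof -
  have a: "2 * (R + u) * M3 * u \<le> 2 * (R + 1) * M3 * u" using u Mnn R0 by (intro mult_right_mono mult_left_mono) auto
  have b: "(R + u) * M2 * u \<le> (R + 1) * M2 * u" using u Mnn R0 by (intro mult_right_mono mult_left_mono) auto
  have c: "(M0 + (R + u) * M1) / l \<le> (M0 + (R + 1) * M1) / l" using u Mnn R0 l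
    by (intro divide_right_mono add_left_mono mult_right_mono) auto
  have eq: "(2 * (R + 1) * M3 + (R + 1) * M2 + 2 * M1) * u + (R * R * M2 + 2 * R * M1) * (1 / (d * l))
     + (2 * (M0 + (R + 1) * M1)) * (1 / l) + (2 * M1) * d
     = 2 * (R + 1) * M3 * u + (R + 1) * M2 * u + M1 * u + M1 * u + (R * R * M2 + 2 * R * M1) / (d * l)
       + 2 * ((M0 + (R + 1) * M1) / l) + 2 * M1 * d"
    using d l by (simp add: field_simps)
  show ?thesis unfolding eq Kc_def using a b c by linarith
qed

end

context asym begin

lemma zq_zero: "zq \<rho> (\<lambda>L N. 0)"
  unfolding zq_def by (intro allI impI, rule evr_mono[OF pos]) auto

lemma good_one: "good \<rho> d (\<lambda>_ _ _. 1) (\<lambda>_ _ _. 0)"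
  unfolding good_def
proof (intro conjI)
  show "\<exists>B\<ge>0. evr \<rho> (\<lambda>L N. \<forall>\<xi>\<in>Omega L N. \<bar>1::real\<bar> \<le> B)"
    by (rule exI[of _ "1::real"], rule conjI, simp, rule evr_mono[OF pos]) auto
  show "\<exists>C\<ge>0. evr \<rho> (\<lambda>L N. \<forall>\<eta>\<in>Omega L N. \<forall>x<L. \<forall>y<L. x \<noteq> y \<longrightarrow> 0 < \<eta> x \<longrightarrow> \<bar>1 - 1::real\<bar> \<le> C / real N)"
    by (rule exI[of _ "0::real"], rule conjI, simp, rule evr_mono[OF pos]) auto
  show "\<exists>B\<ge>0. evr \<rho> (\<lambda>L N. \<forall>\<eta>\<in>Omega L N. \<bar>0::real\<bar> \<le> B)"
    by (rule exI[of _ "0::real"], rule conjI, simp, rule evr_mono[OF pos]) auto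
  show "small \<rho> (\<lambda>L N \<eta>. gen L (d L) (\<lambda>_. 1) \<eta> / (d L * real L) - 0)"
    by (rule small_bound[OF zq_zero], rule evr_mono[OF pos]) (simp add: gen_def)
qed

lemma good_const: "good \<rho> d (\<lambda>L N \<xi>. emp L N (d L) \<xi> (\<lambda>_. c)) (\<lambda>L N \<eta>. emp L N (d L) \<eta> (Ahat (\<lambda>_. c)))"
  unfolding good_def
proof (intro conjI)
  show "\<exists>B\<ge>0. evr \<rho> (\<lambda>L N. \<forall>\<xi>\<in>Omega L N. \<bar>emp L N (d L) \<xi> (\<lambda>_. c)\<bar> \<le> B)"
    by (rule exI[of _ "\<bar>c\<bar>"], rule conjI, simp, rule evr_mono[OF pos]) (auto simp: emp_const)
  show "\<exists>C\<ge>0. evr \<rho> (\<lambda>L N. \<forall>\<eta>\<in>Omega L N. \<forall>x<L. \<forall>y<L. x \<noteq> y \<longrightarrow> 0 < \<eta> x \<longrightarrow>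
      \<bar>emp L N (d L) (jump \<eta> x y) (\<lambda>_. c) - emp L N (d L) \<eta> (\<lambda>_. c)\<bar> \<le> C / real N)"
    by (rule exI[of _ "0::real"], rule conjI, simp, rule evr_mono[OF pos]) (auto simp: emp_const jump_Omega)
  show "\<exists>B\<ge>0. evr \<rho> (\<lambda>L N. \<forall>\<eta>\<in>Omega L N. \<bar>emp L N (d L) \<eta> (Ahat (\<lambda>_. c))\<bar> \<le> B)"
    by (rule exI[of _ "0::real"], rule conjI, simp, rule evr_mono[OF pos]) (auto simp: emp_Ahat_const)
  show "small \<rho> (\<lambda>L N \<eta>. gen L (d L) (\<lambda>\<xi>. emp L N (d L) \<xi> (\<lambda>_. c)) \<eta> / (d L * real L) - emp L N (d L) \<eta> (Ahat (\<lambda>_. c)))"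
    by (rule small_bound[OF zq_zero], rule evr_mono[OF pos]) (auto simp: gen_emp_const emp_Ahat_const)
qed

lemma good_c3:
  assumes cf: "c3fb (hr h) f1 f2 f3 R M0 M1 M2 M3"
  shows "good \<rho> d (\<lambda>L N \<xi>. emp L N (d L) \<xi> h) (\<lambda>L N \<eta>. emp L N (d L) \<eta> (Ahat h))"
proof -
  interpret c3fb "hr h" f1 f2 f3 R M0 M1 M2 M3 by fact
  have c3: "c3f (hr h) f1 f2 f3 R" by (rule c3f_axioms)
  have U: "evr \<rho> (\<lambda>L N. \<bar>d L * real L / real N\<bar> \<le> 1)" using zq_u unfolding zq_def by simp
  have P: "evr \<rho> (\<lambda>L N. (0 < L \<and> 0 < N \<and> 0 < d L \<and> \<rho> / 2 * real L < real N \<and> real N < 2 * \<rho> * real L)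
     \<and> \<bar>d L * real L / real N\<bar> \<le> 1)" by (rule evr_conj[OF pos U])
  have a: "\<exists>B\<ge>0. evr \<rho> (\<lambda>L N. \<forall>\<xi>\<in>Omega L N. \<bar>emp L N (d L) \<xi> h\<bar> \<le> B)"
  proof (intro exI[of _ M0] conjI)
    show "M0 \<ge> 0" by (rule Mnn)
    show "evr \<rho> (\<lambda>L N. \<forall>\<xi>\<in>Omega L N. \<bar>emp L N (d L) \<xi> h\<bar> \<le> M0)"
    proof (rule evr_mono[OF pos], intro ballI)
      fix L N \<xi> assume h: "0 < L \<and> 0 < N \<and> 0 < d L \<and> \<rho> / 2 * real L < real N \<and> real N < 2 * \<rho> * real L"
        and om: "\<xi> \<in> Omega L N"
      show "\<bar>emp L N (d L) \<xi> h\<bar> \<le> M0"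
      proof (rule emp_bound[OF om _ Mnn(1)])
        fix x assume "x < L" "0 < \<xi> x"
        have "d L * real L * real (\<xi> x) / real N \<ge> 0" using h by simp
        then show "\<bar>h (ennreal (d L * real L * real (\<xi> x) / real N))\<bar> \<le> M0" using M0 by (simp add: hr_def)
      qed (use h in auto)
    qed
  qed
  have c: "\<exists>B\<ge>0. evr \<rho> (\<lambda>L N. \<forall>\<eta>\<in>Omega L N. \<bar>emp L N (d L) \<eta> (Ahat h)\<bar> \<le> B)"
  proof (intro exI[of _ "R * M2 + 2 * M1 + R * M1 + 2 * M0"] conjI)
    show "R * M2 + 2 * M1 + R * M1 + 2 * M0 \<ge> 0" using Mnn R0 by simp
    show "evr \<rho> (\<lambda>L N. \<forall>\<eta>\<in>Omega L N. \<bar>emp L N (d L) \<eta> (Ahat h)\<bar> \<le> R * M2 + 2 * M1 + R * M1 + 2 * M0)"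
    proof (rule evr_mono[OF pos], intro ballI)
      fix L N \<xi> assume h: "0 < L \<and> 0 < N \<and> 0 < d L \<and> \<rho> / 2 * real L < real N \<and> real N < 2 * \<rho> * real L"
        and om: "\<xi> \<in> Omega L N"
      show "\<bar>emp L N (d L) \<xi> (Ahat h)\<bar> \<le> R * M2 + 2 * M1 + R * M1 + 2 * M0"
      proof (rule emp_bound[OF om])
        fix x assume "x < L" "0 < \<xi> x"
        then have p: "d L * real L * real (\<xi> x) / real N > 0" using h by simp
        show "\<bar>Ahat h (ennreal (d L * real L * real (\<xi> x) / real N))\<bar> \<le> R * M2 + 2 * M1 + R * M1 + 2 * M0"
          unfolding Ahat_pos[OF c3 p] by (rule A_bound) (use p in simp)
      qed (use h Mnn R0 in auto)
    qed
  qed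
  have b: "\<exists>C\<ge>0. evr \<rho> (\<lambda>L N. \<forall>\<eta>\<in>Omega L N. \<forall>x<L. \<forall>y<L. x \<noteq> y \<longrightarrow> 0 < \<eta> x \<longrightarrow>
      \<bar>emp L N (d L) (jump \<eta> x y) h - emp L N (d L) \<eta> h\<bar> \<le> C / real N)"
  proof (intro exI[of _ "2 * (M0 + (R + 1) * M1)"] conjI)
    show "2 * (M0 + (R + 1) * M1) \<ge> 0" using Mnn R0 by simp
    show "evr \<rho> (\<lambda>L N. \<forall>\<eta>\<in>Omega L N. \<forall>x<L. \<forall>y<L. x \<noteq> y \<longrightarrow> 0 < \<eta> x \<longrightarrow>
      \<bar>emp L N (d L) (jump \<eta> x y) h - emp L N (d L) \<eta> h\<bar> \<le> 2 * (M0 + (R + 1) * M1) / real N)"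
    proof (rule evr_mono[OF P], intro ballI allI impI)
      fix L N \<eta> x y assume h: "(0 < L \<and> 0 < N \<and> 0 < d L \<and> \<rho> / 2 * real L < real N \<and> real N < 2 * \<rho> * real L)
         \<and> \<bar>d L * real L / real N\<bar> \<le> 1"
        and om: "\<eta> \<in> Omega L N" and xy: "x < L" "y < L" "x \<noteq> y" "0 < \<eta> x"
      define u where "u = d L * real L / real N"
      define gg where "gg = (\<lambda>j::nat. (real j / real N) * hr h (u * real j))"
      have u0: "u > 0" "u \<le> 1" using h by (auto simp: u_def)
      have N: "real N > 0" using h by simp
      have e: "emp L N (d L) \<xi> h = (\<Sum>z<L. gg (\<xi> z))" for \<xi>
        using emp_gg[of N L "d L" \<xi> h] h unfolding gg_def u_def by simp
      have j: "emp L N (d L) (jump \<eta> x y) h - emp L N (d L) \<eta> h = (gg (\<eta> x - 1) - gg (\<eta> x)) + (gg (\<eta> y + 1) - gg (\<eta> y))"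
        unfolding e using jump_sum[OF xy(1-3), of gg \<eta>] by simp
      have g1: "\<bar>gg (\<eta> x - 1) - gg (\<eta> x)\<bar> \<le> (M0 + (R + u) * M1) / real N"
        using gg_diffs(1)[OF N u0(1), of "\<eta> x"] xy(4) unfolding gg_def by simp
      have g2: "\<bar>gg (\<eta> y + 1) - gg (\<eta> y)\<bar> \<le> (M0 + (R + u) * M1) / real N"
        using gg_diffs(2)[OF N u0(1), of "\<eta> y"] unfolding gg_def by simp
      have "(M0 + (R + u) * M1) / real N \<le> (M0 + (R + 1) * M1) / real N"
        using u0 Mnn N by (intro divide_right_mono add_left_mono mult_right_mono) auto
      then show "\<bar>emp L N (d L) (jump \<eta> x y) h - emp L N (d L) \<eta> h\<bar> \<le> 2 * (M0 + (R + 1) * M1) / real N"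
        unfolding j using g1 g2 abs_triangle_ineq[of "gg (\<eta> x - 1) - gg (\<eta> x)" "gg (\<eta> y + 1) - gg (\<eta> y)"]
          add_divide_distrib[of "M0 + (R + 1) * M1" "M0 + (R + 1) * M1" "real N"] by linarith
    qed
  qed
  define c1 where "c1 = 2 * (R + 1) * M3 + (R + 1) * M2 + 2 * M1"
  define c2 where "c2 = R * R * M2 + 2 * R * M1"
  define c3' where "c3' = 2 * (M0 + (R + 1) * M1)"
  define c4 where "c4 = 2 * M1"
  have zqq: "zq \<rho> (\<lambda>L N. c1 * (d L * real L / real N) + c2 * (1 / (d L * real L)) + c3' * (1 / real L) + c4 * d L)"
    by (intro zq_add zq_scale zq_u zq_invdL zq_invL zq_d)
  have s: "small \<rho> (\<lambda>L N \<eta>. gen L (d L) (\<lambda>\<xi>. emp L N (d L) \<xi> h) \<eta> / (d L * real L) - emp L N (d L) \<eta> (Ahat h))"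
  proof (rule small_bound[OF zqq], rule evr_mono[OF P], intro ballI)
    fix L N \<eta> assume h: "(0 < L \<and> 0 < N \<and> 0 < d L \<and> \<rho> / 2 * real L < real N \<and> real N < 2 * \<rho> * real L)
         \<and> \<bar>d L * real L / real N\<bar> \<le> 1"
      and om: "\<eta> \<in> Omega L N"
    have u0: "d L * real L / real N > 0" "d L * real L / real N \<le> 1" using h by auto
    have "\<bar>gen L (d L) (\<lambda>\<xi>. emp L N (d L) \<xi> h) \<eta> / (d L * real L) - emp L N (d L) \<eta> (Ahat h)\<bar>
       \<le> Kc (real L) (d L) (d L * real L / real N) + M1 * (d L * real L / real N)"
      by (rule main_bound[OF refl om]) (use h u0 in auto)
    also have "\<dots> \<le> c1 * (d L * real L / real N) + c2 * (1 / (d L * real L)) + c3' * (1 / real L) + c4 * d L"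
      unfolding c1_def c2_def c3'_def c4_def using Kc_le[OF u0, of "d L" "real L"] h by (simp add: ac_simps)
    finally show "\<bar>gen L (d L) (\<lambda>\<xi>. emp L N (d L) \<xi> h) \<eta> / (d L * real L) - emp L N (d L) \<eta> (Ahat h)\<bar>
       \<le> c1 * (d L * real L / real N) + c2 * (1 / (d L * real L)) + c3' * (1 / real L) + c4 * d L" .
  qed
  show ?thesis unfolding good_def by (intro conjI a b c s)
qed

end


context asym begin

lemma good_single:
  assumes "domA h"
  shows "good \<rho> d (\<lambda>L N \<xi>. emp L N (d L) \<xi> h) (\<lambda>L N \<eta>. emp L N (d L) \<eta> (Ahat h))"
proof (cases "\<exists>c. h = (\<lambda>_. c)")
  case True
  then obtain c where "h = (\<lambda>_. c)" by blast
  then show ?thesis using good_const by simp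
next
  case False
  then have "C3c_Rplus (hr h)" using assms unfolding domA_def by blast
  then obtain f1 f2 f3 R where D: "\<forall>x\<ge>0. (hr h has_real_derivative f1 x) (at x within {0..}) \<and>
       (f1 has_real_derivative f2 x) (at x within {0..}) \<and>
       (f2 has_real_derivative f3 x) (at x within {0..})"
    and C: "continuous_on {0..} f3" and S: "\<forall>x\<ge>R. hr h x = 0"
    unfolding C3c_Rplus_def by blast
  have c3: "c3f (hr h) f1 f2 f3 (max R 0)"
    by (unfold_locales) (use D C S in auto)
  obtain M0 M1 M2 M3 where M: "M0 \<ge> 0 \<and> M1 \<ge> 0 \<and> M2 \<ge> 0 \<and> M3 \<ge> 0 \<and>
   (\<forall>x\<ge>0. \<bar>hr h x\<bar> \<le> M0 \<and> \<bar>f1 x\<bar> \<le> M1 \<and> \<bar>f2 x\<bar> \<le> M2 \<and> \<bar>f3 x\<bar> \<le> M3)"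
    using c3f.bounds[OF c3] by blast
  have "c3fb (hr h) f1 f2 f3 (max R 0) M0 M1 M2 M3"
    unfolding c3fb_def c3fb_axioms_def using c3 M by auto
  then show ?thesis by (rule good_c3)
qed

lemma good_mono:
  "(\<forall>h\<in>set hs. domA h) \<Longrightarrow> good \<rho> d (\<lambda>L N \<xi>. prod_list (map (emp L N (d L) \<xi>) hs)) (\<lambda>L N \<eta>. gterm hs (emp L N (d L) \<eta>))"
proof (induction hs)
  case Nil
  then show ?case using good_one by simp
next
  case (Cons h hs)
  have "good \<rho> d (\<lambda>L N \<xi>. emp L N (d L) \<xi> h * prod_list (map (emp L N (d L) \<xi>) hs))
     (\<lambda>L N \<eta>. emp L N (d L) \<eta> (Ahat h) * prod_list (map (emp L N (d L) \<eta>) hs) + emp L N (d L) \<eta> h * gterm hs (emp L N (d L) \<eta>))"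
    using good_mult[OF good_single Cons.IH] Cons.prems by simp
  then show ?case by simp
qed

lemma small_poly:
  "polyrep_ok P \<Longrightarrow> small \<rho> (\<lambda>L N \<eta>. gen L (d L) (\<lambda>\<xi>. evalH P (emp L N (d L) \<xi>)) \<eta> / (d L * real L) - genH P (emp L N (d L) \<eta>))"
proof (induction P)
  case Nil
  show ?case by (rule small_bound[OF zq_zero], rule evr_mono[OF pos]) (simp add: evalH_Nil genH_Nil gen_zero)
next
  case (Cons p P)
  obtain c hs where p: "p = (c, hs)" by fastforce
  have ok: "polyrep_ok P" "\<forall>h\<in>set hs. domA h" using Cons.prems unfolding polyrep_ok_def p by auto
  have g: "good \<rho> d (\<lambda>L N \<xi>. prod_list (map (emp L N (d L) \<xi>) hs)) (\<lambda>L N \<eta>. gterm hs (emp L N (d L) \<eta>))"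
    by (rule good_mono[OF ok(2)])
  then have sm: "small \<rho> (\<lambda>L N \<eta>. gen L (d L) (\<lambda>\<xi>. prod_list (map (emp L N (d L) \<xi>) hs)) \<eta> / (d L * real L) - gterm hs (emp L N (d L) \<eta>))"
    unfolding good_def by blast
  have "small \<rho> (\<lambda>L N \<eta>. c * (gen L (d L) (\<lambda>\<xi>. prod_list (map (emp L N (d L) \<xi>) hs)) \<eta> / (d L * real L) - gterm hs (emp L N (d L) \<eta>))
      + (gen L (d L) (\<lambda>\<xi>. evalH P (emp L N (d L) \<xi>)) \<eta> / (d L * real L) - genH P (emp L N (d L) \<eta>)))"
    by (rule small_add[OF small_scale[OF sm] Cons.IH[OF ok(1)]])
  moreover have "gen L (d L) (\<lambda>\<xi>. evalH ((c, hs) # P) (emp L N (d L) \<xi>)) \<eta> / (d L * real L) - genH ((c, hs) # P) (emp L N (d L) \<eta>)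
     = c * (gen L (d L) (\<lambda>\<xi>. prod_list (map (emp L N (d L) \<xi>) hs)) \<eta> / (d L * real L) - gterm hs (emp L N (d L) \<eta>))
      + (gen L (d L) (\<lambda>\<xi>. evalH P (emp L N (d L) \<xi>)) \<eta> / (d L * real L) - genH P (emp L N (d L) \<eta>))" for L N \<eta>
    unfolding evalH_Cons genH_Cons gen_add gen_scale by (simp add: algebra_simps add_divide_distrib)
  ultimately show ?case unfolding p by simp
qed

end

theorem proposition3p1:
  fixes \<rho> :: real and d :: "nat \<Rightarrow> real" and P :: polyrep
  assumes "\<rho> > 0"
    and "d \<longlonglongrightarrow> 0"
    and "filterlim (\<lambda>L. d L * real L) at_top sequentially"
    and "polyrep_ok P"
  shows "\<forall>\<epsilon>>0. \<exists>\<delta>>0. \<exists>L0. \<forall>L N. L \<ge> L0 \<and> \<bar>real N / real L - \<rho>\<bar> < \<delta> \<longrightarrow>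
           (\<forall>\<eta>\<in>Omega L N.
              \<bar>gen L (d L) (\<lambda>\<xi>. evalH P (emp L N (d L) \<xi>)) \<eta> / (d L * real L)
               - genH P (emp L N (d L) \<eta>)\<bar> \<le> \<epsilon>)"
proof -
  interpret asym \<rho> d by unfold_locales (use assms in auto)
  show ?thesis using small_poly[OF assms(4)] unfolding small_def evr_def .
qed


end
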